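(* For any $\epsilon\in(0,1]$: $$\|\nabla u_{\epsilon,V,f}\|_{L^2(\Omega)^N}\le\frac{C_\Omega\|f\|_{L^2(\Omega)}}{\lambda\epsilon^2},\qquad\|\nabla u_{\epsilon,f}\|_{L^2(\Omega)^N}\le\frac{C_\Omega\|f\|_{L^2(\Omega)}}{\lambda\epsilon^2},$$ $$\|\nabla_{X_2}u_{V,f}\|_{L^2(\Omega)^{N-q}}\le\frac{C_{\omega_2}\|f\|_{L^2(\Omega)}}{\lambda},\qquad\|\nabla_{X_2}u_f\|_{L^2(\Omega)^{N-q}}\le\frac{C_{\omega_2}\|f\|_{L^2(\Omega)}}{\lambda},$$ $$\|\beta(u_{\epsilon,V,f})\|_{L^2(\Omega)},\ \|\beta(u_{\epsilon,f})\|_{L^2(\Omega)}\le\frac{M}{\epsilon^2}\Big(|\Omega|^{1/2}+\frac{C_\Omega^2\|f\|_{L^2(\Omega)}}{\lambda}\Big),$$ $$\|\beta(u_{V,f})\|_{L^2(\Omega)},\ \|\beta(u_f)\|_{L^2(\Omega)}\le M\Big(|\Omega|^{1/2}+\frac{C_{\omega_2}^2\|f\|_{L^2(\Omega)}}{\lambda}\Big).$$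
   Context: $\Omega=\omega_1\times\omega_2$, $\omega_1\subset\mathbb{R}^q$, $\omega_2\subset\mathbb{R}^{N-q}$ bounded open, $f\in L^2(\Omega)$. $A=(a_{ij})$ with $a_{ij}\in L^\infty(\Omega)$ and $A\xi\cdot\xi\ge\lambda|\xi|^2$ ($\lambda>0$); blocks $A_{11},A_{12},A_{21},A_{22}$; $A_\epsilon=\begin{pmatrix}\epsilon^2A_{11}&\epsilon A_{12}\\ \epsilon A_{21}&A_{22}\end{pmatrix}$. $\beta:\mathbb{R}\to\mathbb{R}$ continuous nondecreasing, $\beta(0)=0$, $|\beta(s)|\le M(1+|s|)$. $H_0^1(\Omega;\omega_2)=\{v\in L^2(\Omega):\nabla_{X_2}v\in L^2,\ v(X_1,\cdot)\in H_0^1(\omega_2)\text{ a.e. }X_1\}$. $V\subset H_0^1(\Omega)$ is a closed subspace of $H_0^1(\Omega;\omega_2)$. $u_{\epsilon,V,f}\in V$ solves $\int\beta(u_{\epsilon,V,f})\varphi+\int A_\epsilon\nabla u_{\epsilon,V,f}\cdot\nabla\varphi=\int f\varphi$ for all $\varphi\in V$; $u_{V,f}\in V$ solves $\int\beta(u_{V,f})\varphi+\int A_{22}\nabla_{X_2}u_{V,f}\cdot\nabla_{X_2}\varphi=\int f\varphi$ for all $\varphi\in V$; $u_{\epsilon,f}\in H_0^1(\Omega)$ is the analogous solution with test space $H_0^1(\Omega)$, and $u_f\in H_0^1(\Omega;\omega_2)$ is the analogous limit solution with test space $H_0^1(\Omega;\omega_2)$. $C_\Omega$ is the Poincaré constant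 of $\Omega$ and $C_{\omega_2}$ satisfies $\|v\|_{L^2(\Omega)}\le C_{\omega_2}\|\nabla_{X_2}v\|$ on $H_0^1(\Omega;\omega_2)$. *)

theory Defs
  imports "HOL-Analysis.Analysis"
begin

text \<open>Points of \<open>R^N = R^q \<times> R^(N-q)\<close> are pairs \<open>(X1, X2) :: 'a \<times> 'b\<close> with
  \<open>'a, 'b :: euclidean_space\<close>; \<open>q = DIM('a)\<close>, \<open>N - q = DIM('b)\<close>.
  Functions are genuine functions (representatives); all integrals are taken
  w.r.t. Lebesgue measure on the open set under consideration.\<close>

coinductive smooth_fun :: "('n::euclidean_space \<Rightarrow> real) \<Rightarrow> bool" where
  "(\<And>x. (\<phi> has_derivative (\<lambda>h. g x \<bullet> h)) (at x)) \<Longrightarrow>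
   (\<And>b. b \<in> Basis \<Longrightarrow> smooth_fun (\<lambda>x. g x \<bullet> b)) \<Longrightarrow> smooth_fun \<phi>"

definition test_fun :: "'n::euclidean_space set \<Rightarrow> ('n \<Rightarrow> real) \<Rightarrow> ('n \<Rightarrow> 'n) \<Rightarrow> bool" where
  "test_fun \<Omega> \<phi> g \<longleftrightarrow> smooth_fun \<phi> \<and> (\<forall>x. (\<phi> has_derivative (\<lambda>h. g x \<bullet> h)) (at x)) \<and>
     (\<exists>K. compact K \<and> K \<subseteq> \<Omega> \<and> (\<forall>x. x \<notin> K \<longrightarrow> \<phi> x = 0))"

definition L2 :: "'n::euclidean_space set \<Rightarrow> ('n \<Rightarrow> 'm::euclidean_space) \<Rightarrow> bool" where
  "L2 \<Omega> g \<longleftrightarrow> set_borel_measurable lebesgue \<Omega> g \<and>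
      set_integrable lebesgue \<Omega> (\<lambda>x. (norm (g x))\<^sup>2)"

definition L2norm :: "'n::euclidean_space set \<Rightarrow> ('n \<Rightarrow> 'm::euclidean_space) \<Rightarrow> real" where
  "L2norm \<Omega> g = sqrt (set_lebesgue_integral lebesgue \<Omega> (\<lambda>x. (norm (g x))\<^sup>2))"

definition loc_integrable :: "'n::euclidean_space set \<Rightarrow> ('n \<Rightarrow> 'm::euclidean_space) \<Rightarrow> bool" where
  "loc_integrable \<Omega> g \<longleftrightarrow> (\<forall>K. compact K \<and> K \<subseteq> \<Omega> \<longrightarrow> set_integrable lebesgue K g)"

definition is_weak_grad :: "'n::euclidean_space set \<Rightarrow> ('n \<Rightarrow> real) \<Rightarrow> ('n \<Rightarrow> 'n) \<Rightarrow> bool" where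
  "is_weak_grad \<Omega> u G \<longleftrightarrow> loc_integrable \<Omega> u \<and> loc_integrable \<Omega> G \<and>
     (\<forall>\<phi> g. test_fun \<Omega> \<phi> g \<longrightarrow>
        set_lebesgue_integral lebesgue \<Omega> (\<lambda>x. u x *\<^sub>R g x)
          = - set_lebesgue_integral lebesgue \<Omega> (\<lambda>x. \<phi> x *\<^sub>R G x))"

definition is_weak_grad2 :: "('a::euclidean_space \<times> 'b::euclidean_space) set \<Rightarrow>
    ('a \<times> 'b \<Rightarrow> real) \<Rightarrow> ('a \<times> 'b \<Rightarrow> 'b) \<Rightarrow> bool" where
  "is_weak_grad2 \<Omega> u G \<longleftrightarrow> loc_integrable \<Omega> u \<and> loc_integrable \<Omega> G \<and>
     (\<forall>\<phi> g. test_fun \<Omega> \<phi> g \<longrightarrow>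
        set_lebesgue_integral lebesgue \<Omega> (\<lambda>x. u x *\<^sub>R snd (g x))
          = - set_lebesgue_integral lebesgue \<Omega> (\<lambda>x. \<phi> x *\<^sub>R G x))"

text \<open>The (a.e. unique) weak gradients, chosen by Hilbert choice.\<close>
definition wgrad :: "'n::euclidean_space set \<Rightarrow> ('n \<Rightarrow> real) \<Rightarrow> 'n \<Rightarrow> 'n" where
  "wgrad \<Omega> u = (SOME G. is_weak_grad \<Omega> u G)"

definition wgrad2 :: "('a::euclidean_space \<times> 'b::euclidean_space) set \<Rightarrow>
    ('a \<times> 'b \<Rightarrow> real) \<Rightarrow> 'a \<times> 'b \<Rightarrow> 'b" where
  "wgrad2 \<Omega> u = (SOME G. is_weak_grad2 \<Omega> u G)"

text \<open>\<open>H_0^1(\<Omega>)\<close>: closure of \<open>C_c^\<infinity>(\<Omega>)\<close> in the \<open>H^1(\<Omega>)\<close> norm.\<close>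
definition H01 :: "'n::euclidean_space set \<Rightarrow> ('n \<Rightarrow> real) \<Rightarrow> bool" where
  "H01 \<Omega> u \<longleftrightarrow> L2 \<Omega> u \<and>
     (\<exists>G. is_weak_grad \<Omega> u G \<and> L2 \<Omega> G \<and>
        (\<exists>\<phi>s gs. (\<forall>n. test_fun \<Omega> (\<phi>s n) (gs n)) \<and>
           (\<lambda>n. L2norm \<Omega> (\<lambda>x. \<phi>s n x - u x)) \<longlonglongrightarrow> 0 \<and>
           (\<lambda>n. L2norm \<Omega> (\<lambda>x. gs n x - G x)) \<longlonglongrightarrow> 0))"

definition H01_X2 :: "'a::euclidean_space set \<Rightarrow> 'b::euclidean_space set \<Rightarrow> ('a \<times> 'b \<Rightarrow> real) \<Rightarrow> bool" where
  "H01_X2 \<omega>1 \<omega>2 v \<longleftrightarrow> L2 (\<omega>1 \<times> \<omega>2) v \<and>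
     (\<exists>G. is_weak_grad2 (\<omega>1 \<times> \<omega>2) v G \<and> L2 (\<omega>1 \<times> \<omega>2) G) \<and>
     (AE X1 in lebesgue. X1 \<in> \<omega>1 \<longrightarrow> H01 \<omega>2 (\<lambda>X2. v (X1, X2)))"

text \<open>The matrix field \<open>A(x)\<close> is a linear map on \<open>'a \<times> 'b\<close>. With \<open>D_\<epsilon>(\<xi>1,\<xi>2) = (\<epsilon>\<xi>1,\<xi>2)\<close>,
  \<open>A_\<epsilon> = D_\<epsilon> A D_\<epsilon>\<close> is exactly the block matrix
  \<open>[[\<epsilon>^2 A11, \<epsilon> A12], [\<epsilon> A21, A22]]\<close>.\<close>
definition Dscale :: "real \<Rightarrow> 'a::euclidean_space \<times> 'b::euclidean_space \<Rightarrow> 'a \<times> 'b" where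
  "Dscale \<epsilon> \<xi> = (\<epsilon> *\<^sub>R fst \<xi>, snd \<xi>)"

definition A_eps :: "real \<Rightarrow> ('a::euclidean_space \<times> 'b::euclidean_space \<Rightarrow> 'a \<times> 'b \<Rightarrow> 'a \<times> 'b)
    \<Rightarrow> 'a \<times> 'b \<Rightarrow> 'a \<times> 'b \<Rightarrow> 'a \<times> 'b" where
  "A_eps \<epsilon> A x \<xi> = Dscale \<epsilon> (A x (Dscale \<epsilon> \<xi>))"

definition A22 :: "('a::euclidean_space \<times> 'b::euclidean_space \<Rightarrow> 'a \<times> 'b \<Rightarrow> 'a \<times> 'b)
    \<Rightarrow> 'a \<times> 'b \<Rightarrow> 'b \<Rightarrow> 'b" where
  "A22 A x \<eta> = snd (A x (0, \<eta>))"

definition sol_eps :: "'a::euclidean_space set \<Rightarrow> 'b::euclidean_space set \<Rightarrow> (real \<Rightarrow> real) \<Rightarrow>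
    ('a \<times> 'b \<Rightarrow> 'a \<times> 'b \<Rightarrow> 'a \<times> 'b) \<Rightarrow> real \<Rightarrow> ('a \<times> 'b \<Rightarrow> real) set \<Rightarrow>
    ('a \<times> 'b \<Rightarrow> real) \<Rightarrow> ('a \<times> 'b \<Rightarrow> real) \<Rightarrow> bool" where
  "sol_eps \<omega>1 \<omega>2 \<beta> A \<epsilon> W f u \<longleftrightarrow> u \<in> W \<and>
     (\<forall>\<phi>\<in>W. set_lebesgue_integral lebesgue (\<omega>1 \<times> \<omega>2) (\<lambda>x. \<beta> (u x) * \<phi> x)
        + set_lebesgue_integral lebesgue (\<omega>1 \<times> \<omega>2)
            (\<lambda>x. A_eps \<epsilon> A x (wgrad (\<omega>1 \<times> \<omega>2) u x) \<bullet> wgrad (\<omega>1 \<times> \<omega>2) \<phi> x)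
        = set_lebesgue_integral lebesgue (\<omega>1 \<times> \<omega>2) (\<lambda>x. f x * \<phi> x))"

definition sol_lim :: "'a::euclidean_space set \<Rightarrow> 'b::euclidean_space set \<Rightarrow> (real \<Rightarrow> real) \<Rightarrow>
    ('a \<times> 'b \<Rightarrow> 'a \<times> 'b \<Rightarrow> 'a \<times> 'b) \<Rightarrow> ('a \<times> 'b \<Rightarrow> real) set \<Rightarrow>
    ('a \<times> 'b \<Rightarrow> real) \<Rightarrow> ('a \<times> 'b \<Rightarrow> real) \<Rightarrow> bool" where
  "sol_lim \<omega>1 \<omega>2 \<beta> A W f u \<longleftrightarrow> u \<in> W \<and>
     (\<forall>\<phi>\<in>W. set_lebesgue_integral lebesgue (\<omega>1 \<times> \<omega>2) (\<lambda>x. \<beta> (u x) * \<phi> x)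
        + set_lebesgue_integral lebesgue (\<omega>1 \<times> \<omega>2)
            (\<lambda>x. A22 A x (wgrad2 (\<omega>1 \<times> \<omega>2) u x) \<bullet> wgrad2 (\<omega>1 \<times> \<omega>2) \<phi> x)
        = set_lebesgue_integral lebesgue (\<omega>1 \<times> \<omega>2) (\<lambda>x. f x * \<phi> x))"

text \<open>\<open>V\<close> is a closed linear subspace of \<open>H_0^1(\<Omega>;\<omega>2)\<close> (closedness modulo a.e. equality
  on \<open>\<Omega>\<close>, norm \<open>\<parallel>v\<parallel>_{L^2} + \<parallel>\<nabla>_{X2} v\<parallel>_{L^2}\<close>) contained in \<open>H_0^1(\<Omega>)\<close>.\<close>
definition admissible_V :: "'a::euclidean_space set \<Rightarrow> 'b::euclidean_space set \<Rightarrow>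
    ('a \<times> 'b \<Rightarrow> real) set \<Rightarrow> bool" where
  "admissible_V \<omega>1 \<omega>2 V \<longleftrightarrow>
     (\<forall>v\<in>V. H01 (\<omega>1 \<times> \<omega>2) v \<and> H01_X2 \<omega>1 \<omega>2 v) \<and>
     (\<lambda>x. 0) \<in> V \<and> (\<forall>v\<in>V. \<forall>w\<in>V. (\<lambda>x. v x + w x) \<in> V) \<and>
     (\<forall>c. \<forall>v\<in>V. (\<lambda>x. c * v x) \<in> V) \<and>
     (\<forall>vs v. (\<forall>n. vs n \<in> V) \<and> H01_X2 \<omega>1 \<omega>2 v \<and>
        (\<lambda>n. L2norm (\<omega>1 \<times> \<omega>2) (\<lambda>x. vs n x - v x)
             + L2norm (\<omega>1 \<times> \<omega>2) (\<lambda>x. wgrad2 (\<omega>1 \<times> \<omega>2) (vs n) x - wgrad2 (\<omega>1 \<times> \<omega>2) v x))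
          \<longlonglongrightarrow> 0
        \<longrightarrow> (\<exists>w\<in>V. AE x in lebesgue. x \<in> \<omega>1 \<times> \<omega>2 \<longrightarrow> w x = v x))"

end

theory Submission
  imports Defs
begin

definition psiL :: "(real \<times> nat) list \<Rightarrow> real \<Rightarrow> real" where
  "psiL L t = (if t > 0 then (\<Sum>(c,k)\<leftarrow>L. c * (1/t)^k) * exp (-1/t) else 0)"

fun dL :: "(real \<times> nat) list \<Rightarrow> (real \<times> nat) list" where
  "dL [] = []"
| "dL ((c,k) # L) = (- c * real k, Suc k) # (c, Suc (Suc k)) # dL L"

lemma psiL_right0: "((\<lambda>t. psiL L t / t) \<longlongrightarrow> 0) (at_right 0)"
proof -
  have "((\<lambda>y. (\<Sum>(c,k)\<leftarrow>L. c * (y ^ Suc k / exp y))) \<longlongrightarrow> 0) at_top"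
  proof (induction L)
    case Nil then show ?case by simp
  next
    case (Cons a L)
    obtain c k where a: "a = (c,k)" by fastforce
    have "((\<lambda>y. c * (y ^ Suc k / exp y) + (\<Sum>(c,k)\<leftarrow>L. c * (y ^ Suc k / exp y))) \<longlongrightarrow> c * 0 + 0) at_top"
      by (intro tendsto_add tendsto_mult tendsto_const tendsto_power_div_exp_0 Cons.IH)
    then show ?case by (simp add: a)
  qed
  then have "((\<lambda>t. (\<Sum>(c,k)\<leftarrow>L. c * (inverse t ^ Suc k / exp (inverse t)))) \<longlongrightarrow> 0) (at_right 0)"
    using filterlim_compose filterlim_inverse_at_top_right by blast
  then show ?thesis
  proof (rule Lim_transform_eventually)
    show "\<forall>\<^sub>F t in at_right 0. (\<Sum>(c,k)\<leftarrow>L. c * (inverse t ^ Suc k / exp (inverse t))) = psiL L t / t"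
    proof (rule eventually_mono[OF eventually_at_right_less])
      fix t :: real assume t: "0 < t"
      have "(\<Sum>(c,k)\<leftarrow>L. c * (inverse t ^ Suc k / exp (inverse t))) = (\<Sum>(c,k)\<leftarrow>L. c * (1/t)^k) * exp (-1/t) / t"
        using t by (induction L) (auto simp: exp_minus field_simps)
      then show "(\<Sum>(c,k)\<leftarrow>L. c * (inverse t ^ Suc k / exp (inverse t))) = psiL L t / t"
        using t by (simp add: psiL_def)
    qed
  qed
qed

lemma psiL_Nil[simp]: "psiL [] t = 0" by (simp add: psiL_def)
lemma psiL_Cons: "psiL (a # L) t = psiL [a] t + psiL L t"
  by (cases a) (simp add: psiL_def algebra_simps)
lemma psiL_append: "psiL (M1 @ M2) t = psiL M1 t + psiL M2 t"
  by (induction M1) (simp, metis append_Cons add.assoc psiL_Cons)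

lemma psi_d0: "t > 0 \<Longrightarrow> ((\<lambda>t. c * (inverse t)^k * exp (- inverse t)) has_real_derivative
        c * (real k * (inverse t)^(k - 1) * (- (inverse t ^ 2))) * exp (- inverse t) + c * (inverse t)^k * (exp (- inverse t) * inverse t ^ 2)) (at t)"
  apply (rule derivative_eq_intros refl | simp)+
  apply (simp add: power2_eq_square algebra_simps)
  done

lemma psiL_deriv1: "(psiL [(c,k)] has_real_derivative psiL (dL [(c,k)]) t) (at t)"
proof -
  consider "t > 0" | "t < 0" | "t = 0" by linarith
  then show ?thesis
  proof cases
    case 1
    note d0 = psi_d0[OF 1, of c k]
    have p: "psiL (dL [(c,k)]) t = (- c * real k * inverse t ^ Suc k + c * inverse t ^ Suc (Suc k)) * exp (- inverse t)"
      using 1 by (simp add: psiL_def divide_inverse)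
    have e: "c * (real k * (inverse t)^(k - 1) * (- (inverse t ^ 2))) * exp (- inverse t) + c * (inverse t)^k * (exp (- inverse t) * inverse t ^ 2)
       = psiL (dL [(c,k)]) t"
      unfolding p by (cases k) (simp_all add: power2_eq_square algebra_simps)
    have d: "((\<lambda>t. c * (1/t)^k * exp (-1/t)) has_real_derivative psiL (dL [(c,k)]) t) (at t)"
      using d0 e by (simp add: divide_inverse)
    show ?thesis
      apply (rule has_field_derivative_transform_within_open[OF d, where S="{0<..}"])
      using 1 by (auto simp: psiL_def)
  next
    case 2
    have "((\<lambda>t. 0) has_real_derivative psiL (dL [(c,k)]) t) (at t)"
      using 2 by (simp add: psiL_def)
    then show ?thesis
      apply (rule has_field_derivative_transform_within_open[where S="{..<0}"])
      using 2 by (auto simp: psiL_def)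
  next
    case 3
    have r: "((\<lambda>y. (psiL [(c,k)] y - psiL [(c,k)] 0) / (y - 0)) \<longlongrightarrow> 0) (at_right 0)"
      using psiL_right0[of "[(c,k)]"] by (simp add: psiL_def)
    have l: "((\<lambda>y. (psiL [(c,k)] y - psiL [(c,k)] 0) / (y - 0)) \<longlongrightarrow> 0) (at_left 0)"
      apply (rule tendsto_eventually)
      apply (rule eventually_mono[OF eventually_at_left_real[of "-1" 0]])
      by (auto simp: psiL_def)
    have "((\<lambda>y. (psiL [(c,k)] y - psiL [(c,k)] 0) / (y - 0)) \<longlongrightarrow> 0) (at 0)"
      using filterlim_split_at[OF l r] .
    then show ?thesis using 3 by (simp add: has_field_derivative_iff psiL_def)
  qed
qed

lemma psiL_deriv: "(psiL L has_real_derivative psiL (dL L) t) (at t)"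
proof (induction L)
  case Nil then show ?case by simp
next
  case (Cons a L)
  obtain c k where a: "a = (c,k)" by fastforce
  have "((\<lambda>t. psiL [a] t + psiL L t) has_real_derivative psiL (dL [a]) t + psiL (dL L) t) (at t)"
    using psiL_deriv1 Cons.IH a by (intro derivative_intros) auto
  then show ?case
  proof -
    have "dL (a # L) = dL [a] @ dL L" using a by simp
    then show ?thesis using \<open>((\<lambda>t. psiL [a] t + psiL L t) has_real_derivative _) _\<close>
      by (simp add: psiL_append psiL_Cons[of a L])
  qed
qed

lemma smooth_psiL: "smooth_fun (psiL L)"
proof (rule smooth_fun.coinduct[of "\<lambda>\<phi>. \<exists>L. \<phi> = psiL L"])
  show "\<exists>L'. psiL L = psiL L'" by blast
next
  fix \<phi> :: "real \<Rightarrow> real" assume "\<exists>L. \<phi> = psiL L"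
  then obtain L where L: "\<phi> = psiL L" by blast
  have d: "\<And>x. (psiL L has_derivative (\<lambda>h. psiL (dL L) x \<bullet> h)) (at x)"
    by (rule has_derivative_eq_rhs[OF psiL_deriv[unfolded has_field_derivative_def]]) (simp add: fun_eq_iff)
  show "\<exists>\<phi>' g. \<phi> = \<phi>' \<and> (\<forall>x. (\<phi>' has_derivative (\<bullet>) (g x)) (at x)) \<and>
             (\<forall>x. x \<in> Basis \<longrightarrow> (\<exists>L. (\<lambda>xa. g xa \<bullet> x) = psiL L) \<or> smooth_fun (\<lambda>xa. g xa \<bullet> x))"
    apply (rule exI[of _ "psiL L"], rule exI[of _ "psiL (dL L)"])
    using d L by auto
qed

lemma smooth_const: "smooth_fun (\<lambda>x::'n::euclidean_space. c)"
proof (rule smooth_fun.coinduct[of "\<lambda>\<phi>. \<exists>c. \<phi> = (\<lambda>x::'n. c)"])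
  show "\<exists>c'. (\<lambda>x::'n. c) = (\<lambda>x. c')" by blast
next
  fix \<phi> :: "'n \<Rightarrow> real" assume "\<exists>c. \<phi> = (\<lambda>x. c)"
  then obtain c where c: "\<phi> = (\<lambda>x. c)" by blast
  have d: "((\<lambda>x::'n. c) has_derivative (\<lambda>h. (0::'n) \<bullet> h)) (at x)" for x
    by (rule has_derivative_eq_rhs[OF has_derivative_const]) simp
  show "\<exists>\<phi>' g. \<phi> = \<phi>' \<and> (\<forall>x. (\<phi>' has_derivative (\<bullet>) (g x)) (at x)) \<and>
             (\<forall>x. x \<in> Basis \<longrightarrow> (\<exists>c. (\<lambda>xa. g xa \<bullet> x) = (\<lambda>x. c)) \<or> smooth_fun (\<lambda>xa. g xa \<bullet> x))"
    apply (rule exI[of _ "\<lambda>x::'n. c"], rule exI[of _ "\<lambda>x::'n. 0::'n"])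
    using c by (auto intro!: d)
qed

definition grad :: "('n::euclidean_space \<Rightarrow> real) \<Rightarrow> 'n \<Rightarrow> 'n" where
  "grad f = (SOME g. (\<forall>x. (f has_derivative (\<lambda>h. g x \<bullet> h)) (at x)) \<and> (\<forall>b\<in>Basis. smooth_fun (\<lambda>x. g x \<bullet> b)))"

lemma grad: assumes "smooth_fun f"
  shows "(f has_derivative (\<lambda>h. grad f x \<bullet> h)) (at x)" "b \<in> Basis \<Longrightarrow> smooth_fun (\<lambda>x. grad f x \<bullet> b)"
proof -
  have "\<exists>g. (\<forall>x. (f has_derivative (\<lambda>h. g x \<bullet> h)) (at x)) \<and> (\<forall>b\<in>Basis. smooth_fun (\<lambda>x. g x \<bullet> b))"
    using assms by (cases rule: smooth_fun.cases) auto
  then have "(\<forall>x. (f has_derivative (\<lambda>h. grad f x \<bullet> h)) (at x)) \<and> (\<forall>b\<in>Basis. smooth_fun (\<lambda>x. grad f x \<bullet> b))"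
    unfolding grad_def by (rule someI_ex)
  then show "(f has_derivative (\<lambda>h. grad f x \<bullet> h)) (at x)" "b \<in> Basis \<Longrightarrow> smooth_fun (\<lambda>x. grad f x \<bullet> b)"
    by auto
qed

fun dP :: "'n::euclidean_space \<Rightarrow> (('n \<Rightarrow> real) \<times> ('n \<Rightarrow> real)) list \<Rightarrow> (('n \<Rightarrow> real) \<times> ('n \<Rightarrow> real)) list" where
  "dP b [] = []"
| "dP b ((f,g) # L) = (\<lambda>x. grad f x \<bullet> b, g) # (f, \<lambda>x. grad g x \<bullet> b) # dP b L"

definition sp :: "(('n \<Rightarrow> real) \<times> ('n \<Rightarrow> real)) list \<Rightarrow> 'n \<Rightarrow> real" where
  "sp L x = (\<Sum>(f,g)\<leftarrow>L. f x * g x)"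

definition gsp :: "(('n::euclidean_space \<Rightarrow> real) \<times> ('n \<Rightarrow> real)) list \<Rightarrow> 'n \<Rightarrow> 'n" where
  "gsp L x = (\<Sum>(f,g)\<leftarrow>L. g x *\<^sub>R grad f x + f x *\<^sub>R grad g x)"

lemma sp_Cons[simp]: "sp ((f,g) # L) x = f x * g x + sp L x" "sp [] x = 0"
  by (simp_all add: sp_def)
lemma gsp_Cons[simp]: "gsp ((f,g) # L) x = g x *\<^sub>R grad f x + f x *\<^sub>R grad g x + gsp L x" "gsp [] x = 0"
  by (simp_all add: gsp_def)

lemma sp_deriv: "\<forall>(f,g)\<in>set L. smooth_fun f \<and> smooth_fun g \<Longrightarrow>
   (sp L has_derivative (\<lambda>h. gsp L x \<bullet> h)) (at x)"
proof (induction L)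
  case Nil
  then show ?case by (auto intro: has_derivative_eq_rhs[OF has_derivative_const] simp: sp_def[abs_def])
next
  case (Cons a L)
  obtain f g where a: "a = (f,g)" by fastforce
  have sf: "smooth_fun f" "smooth_fun g" using Cons.prems a by auto
  have "((\<lambda>x. f x * g x + sp L x) has_derivative
     (\<lambda>h. f x * (grad g x \<bullet> h) + (grad f x \<bullet> h) * g x + gsp L x \<bullet> h)) (at x)"
    using Cons grad(1)[OF sf(1)] grad(1)[OF sf(2)]
    by (intro has_derivative_add has_derivative_mult) auto
  then show ?case using a
    by (simp add: sp_Cons[abs_def] inner_add_left algebra_simps)
qed

lemma gsp_comp: "gsp L x \<bullet> b = sp (dP b L) x"
  by (induction L rule: dP.induct) (auto simp: inner_add_left algebra_simps)

lemma dP_smooth: "\<forall>(f,g)\<in>set L. smooth_fun f \<and> smooth_fun g \<Longrightarrow> b \<in> Basis \<Longrightarrow>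
    \<forall>(f,g)\<in>set (dP b L). smooth_fun f \<and> smooth_fun g"
  by (induction L rule: dP.induct) (auto intro: grad(2))

lemma smooth_sp: "\<forall>(f,g)\<in>set L. smooth_fun f \<and> smooth_fun g \<Longrightarrow> smooth_fun (sp L)"
proof (rule smooth_fun.coinduct[of "\<lambda>F. \<exists>L. (\<forall>(f,g)\<in>set L. smooth_fun f \<and> smooth_fun g) \<and> F = sp L"])
  assume "\<forall>(f,g)\<in>set L. smooth_fun f \<and> smooth_fun g"
  then show "\<exists>L'. (\<forall>(f,g)\<in>set L'. smooth_fun f \<and> smooth_fun g) \<and> sp L = sp L'" by blast
next
  fix F :: "'a \<Rightarrow> real" assume "\<exists>L. (\<forall>(f,g)\<in>set L. smooth_fun f \<and> smooth_fun g) \<and> F = sp L"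
  then obtain L where L: "\<forall>(f,g)\<in>set L. smooth_fun f \<and> smooth_fun g" "F = sp L" by blast
  have c: "\<And>b. (\<lambda>x. gsp L x \<bullet> b) = sp (dP b L)" by (simp add: fun_eq_iff gsp_comp)
  show "\<exists>\<phi>' g. F = \<phi>' \<and> (\<forall>x. (\<phi>' has_derivative (\<bullet>) (g x)) (at x)) \<and>
             (\<forall>x. x \<in> Basis \<longrightarrow> (\<exists>L. (\<forall>(f,g)\<in>set L. smooth_fun f \<and> smooth_fun g) \<and> (\<lambda>xa. g xa \<bullet> x) = sp L) \<or> smooth_fun (\<lambda>xa. g xa \<bullet> x))"
    apply (rule exI[of _ "sp L"], rule exI[of _ "gsp L"])
    apply (intro conjI allI impI disjI1)
      apply (simp add: L)
     apply (rule sp_deriv[OF L(1)])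
    apply (subst c)
    using dP_smooth[OF L(1)] by blast
qed

lemma smooth_mult: "smooth_fun f \<Longrightarrow> smooth_fun g \<Longrightarrow> smooth_fun (\<lambda>x. f x * g x)"
proof -
  assume "smooth_fun f" "smooth_fun g"
  then have "smooth_fun (sp [(f,g)])" by (intro smooth_sp) auto
  moreover have "sp [(f,g)] = (\<lambda>x. f x * g x)" by (auto simp: fun_eq_iff)
  ultimately show ?thesis by simp
qed

lemma smooth_add: "smooth_fun f \<Longrightarrow> smooth_fun g \<Longrightarrow> smooth_fun (\<lambda>x. f x + g x)"
proof -
  assume "smooth_fun f" "smooth_fun g"
  then have "smooth_fun (sp [(f,\<lambda>x. 1),(g,\<lambda>x. 1)])" using smooth_const by (intro smooth_sp) auto
  moreover have "sp [(f,\<lambda>x. 1),(g,\<lambda>x. 1)] = (\<lambda>x. f x + g x)" by (auto simp: fun_eq_iff)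
  ultimately show ?thesis by simp
qed

lemma smooth_affine: "smooth_fun (\<lambda>x::'n::euclidean_space. x \<bullet> v + d)"
proof (rule smooth_fun.intros)
  fix x :: 'n
  show "((\<lambda>x. x \<bullet> v + d) has_derivative (\<lambda>h. v \<bullet> h)) (at x)"
    by (auto intro!: derivative_eq_intros simp: inner_commute)
next
  fix b :: 'n show "smooth_fun (\<lambda>x::'n. v \<bullet> b)" by (rule smooth_const)
qed

lemma smooth_quad: "smooth_fun (\<lambda>x::'n::euclidean_space. s - (x - c) \<bullet> (x - c))"
proof (rule smooth_fun.intros)
  fix x :: 'n
  show "((\<lambda>x. s - (x - c) \<bullet> (x - c)) has_derivative (\<lambda>h. (-2 *\<^sub>R (x - c)) \<bullet> h)) (at x)"
    by (auto intro!: derivative_eq_intros simp: inner_commute algebra_simps)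
next
  fix b :: 'n
  have "(\<lambda>x. (-2 *\<^sub>R (x - c)) \<bullet> b) = (\<lambda>x. x \<bullet> (-2 *\<^sub>R b) + 2 * (c \<bullet> b))"
    by (auto simp: fun_eq_iff algebra_simps inner_diff_left)
  then show "smooth_fun (\<lambda>x::'n. (-2 *\<^sub>R (x - c)) \<bullet> b)" using smooth_affine by metis
qed

fun dC :: "('n::euclidean_space \<Rightarrow> real) \<Rightarrow> 'n \<Rightarrow> ((real \<Rightarrow> real) \<times> ('n \<Rightarrow> real)) list \<Rightarrow> ((real \<Rightarrow> real) \<times> ('n \<Rightarrow> real)) list" where
  "dC h e [] = []"
| "dC h e ((a,b) # L) = (\<lambda>t. grad a t \<bullet> 1, \<lambda>x. b x * (grad h x \<bullet> e)) # (a, \<lambda>x. grad b x \<bullet> e) # dC h e L"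

definition sc :: "('n \<Rightarrow> real) \<Rightarrow> ((real \<Rightarrow> real) \<times> ('n \<Rightarrow> real)) list \<Rightarrow> 'n \<Rightarrow> real" where
  "sc h L x = (\<Sum>(a,b)\<leftarrow>L. a (h x) * b x)"

definition gsc :: "('n::euclidean_space \<Rightarrow> real) \<Rightarrow> ((real \<Rightarrow> real) \<times> ('n \<Rightarrow> real)) list \<Rightarrow> 'n \<Rightarrow> 'n" where
  "gsc h L x = (\<Sum>(a,b)\<leftarrow>L. (b x * (grad a (h x) \<bullet> 1)) *\<^sub>R grad h x + a (h x) *\<^sub>R grad b x)"

lemma sc_Cons[simp]: "sc h ((a,b) # L) x = a (h x) * b x + sc h L x" "sc h [] x = 0"
  by (simp_all add: sc_def)
lemma gsc_Cons[simp]: "gsc h ((a,b) # L) x = (b x * (grad a (h x) \<bullet> 1)) *\<^sub>R grad h x + a (h x) *\<^sub>R grad b x + gsc h L x" "gsc h [] x = 0"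
  by (simp_all add: gsc_def)

lemma sc_deriv: "smooth_fun h \<Longrightarrow> \<forall>(a,b)\<in>set L. smooth_fun a \<and> smooth_fun b \<Longrightarrow>
   (sc h L has_derivative (\<lambda>v. gsc h L x \<bullet> v)) (at x)"
proof (induction L)
  case Nil
  have "((\<lambda>x. 0::real) has_derivative (\<lambda>v. (0::'a) \<bullet> v)) (at x)"
    by (rule has_derivative_eq_rhs[OF has_derivative_const]) simp
  then show ?case by (simp add: sc_def[abs_def])
next
  case (Cons p L)
  obtain a b where p: "p = (a,b)" by fastforce
  have sf: "smooth_fun a" "smooth_fun b" using Cons.prems p by auto
  have "((\<lambda>x. a (h x) * b x + sc h L x) has_derivative
     (\<lambda>v. a (h x) * (grad b x \<bullet> v) + (grad a (h x) \<bullet> (grad h x \<bullet> v)) * b x + gsc h L x \<bullet> v)) (at x)"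
    using Cons grad(1)[OF sf(2)]
    by (intro has_derivative_add has_derivative_mult has_derivative_compose[OF grad(1)[OF Cons.prems(1)] grad(1)[OF sf(1)]]) auto
  then show ?case using p
    by (simp add: sc_Cons[abs_def] inner_add_left algebra_simps inner_real_def)
qed

lemma grad_real_smooth: "smooth_fun (a::real\<Rightarrow>real) \<Longrightarrow> smooth_fun (grad a)"
  using grad(2)[of a 1] by simp

lemma gsc_comp: "gsc h L x \<bullet> e = sc h (dC h e L) x"
  by (induction h e L rule: dC.induct) (auto simp: inner_add_left algebra_simps inner_real_def)

lemma dC_smooth: "smooth_fun h \<Longrightarrow> \<forall>(a,b)\<in>set L. smooth_fun a \<and> smooth_fun b \<Longrightarrow> e \<in> Basis \<Longrightarrow>
    \<forall>(a,b)\<in>set (dC h e L). smooth_fun a \<and> smooth_fun b"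
  by (induction h e L rule: dC.induct) (auto intro: grad(2) smooth_mult grad_real_smooth)

lemma smooth_sc: "smooth_fun h \<Longrightarrow> \<forall>(a,b)\<in>set L. smooth_fun a \<and> smooth_fun b \<Longrightarrow> smooth_fun (sc h L)"
proof (rule smooth_fun.coinduct[of "\<lambda>F. \<exists>L. (\<forall>(a,b)\<in>set L. smooth_fun a \<and> smooth_fun b) \<and> F = sc h L"])
  assume "\<forall>(a,b)\<in>set L. smooth_fun a \<and> smooth_fun b"
  then show "\<exists>L'. (\<forall>(a,b)\<in>set L'. smooth_fun a \<and> smooth_fun b) \<and> sc h L = sc h L'" by blast
next
  assume h: "smooth_fun h"
  fix F :: "'a \<Rightarrow> real" assume "\<exists>L. (\<forall>(a,b)\<in>set L. smooth_fun a \<and> smooth_fun b) \<and> F = sc h L"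
  then obtain L where L: "\<forall>(a,b)\<in>set L. smooth_fun a \<and> smooth_fun b" "F = sc h L" by blast
  have c: "\<And>e. (\<lambda>x. gsc h L x \<bullet> e) = sc h (dC h e L)" by (simp add: fun_eq_iff gsc_comp)
  show "\<exists>\<phi>' g. F = \<phi>' \<and> (\<forall>x. (\<phi>' has_derivative (\<bullet>) (g x)) (at x)) \<and>
             (\<forall>x. x \<in> Basis \<longrightarrow> (\<exists>L. (\<forall>(a,b)\<in>set L. smooth_fun a \<and> smooth_fun b) \<and> (\<lambda>xa. g xa \<bullet> x) = sc h L) \<or> smooth_fun (\<lambda>xa. g xa \<bullet> x))"
    apply (rule exI[of _ "sc h L"], rule exI[of _ "gsc h L"])
    apply (intro conjI allI impI disjI1)
      apply (simp add: L)
     apply (rule sc_deriv[OF h L(1)])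
    apply (subst c)
    using dC_smooth[OF h L(1)] by blast
qed

definition psi :: "real \<Rightarrow> real" where "psi = psiL [(1,0)]"

lemma psi_pos: "t > 0 \<Longrightarrow> psi t > 0" and psi_zero: "t \<le> 0 \<Longrightarrow> psi t = 0"
  by (auto simp: psi_def psiL_def)

lemma smooth_comp: "smooth_fun h \<Longrightarrow> smooth_fun a \<Longrightarrow> smooth_fun (\<lambda>x. a (h x))"
proof -
  assume "smooth_fun h" "smooth_fun a"
  then have "smooth_fun (sc h [(a, \<lambda>x. 1)])" using smooth_const by (intro smooth_sc) auto
  moreover have "sc h [(a, \<lambda>x. 1)] = (\<lambda>x. a (h x))" by (auto simp: fun_eq_iff)
  ultimately show ?thesis by simp
qed

definition bump :: "real \<Rightarrow> 'n::euclidean_space \<Rightarrow> 'n \<Rightarrow> real" where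
  "bump s c x = psi (s - (x - c) \<bullet> (x - c))"

lemma smooth_bump: "smooth_fun (bump s c)"
  unfolding bump_def[abs_def] psi_def by (rule smooth_comp[OF smooth_quad smooth_psiL])

lemma deriv_zero_outside:
  fixes w :: "'n::euclidean_space \<Rightarrow> real"
  assumes "\<And>x. (w has_derivative (\<lambda>h. G x \<bullet> h)) (at x)" "closed K" "\<And>x. x \<notin> K \<Longrightarrow> w x = 0" "x \<notin> K"
  shows "G x = 0"
proof -
  have "((\<lambda>x. 0) has_derivative (\<lambda>h. G x \<bullet> h)) (at x)"
    by (rule has_derivative_transform_within_open[OF assms(1), where s="- K"]) (use assms in auto)
  moreover have "((\<lambda>x. 0::real) has_derivative (\<lambda>h. 0)) (at x)" by simp
  ultimately have "(\<lambda>h. G x \<bullet> h) = (\<lambda>h. 0)" by (rule has_derivative_unique)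
  then have "G x \<bullet> G x = 0" by metis
  then show ?thesis by simp
qed

lemma bounded_on_compact:
  fixes G :: "'n::euclidean_space \<Rightarrow> 'm::euclidean_space"
  assumes "continuous_on UNIV G" "compact S"
  obtains B where "\<And>y. y \<in> S \<Longrightarrow> norm (G y) \<le> B"
proof -
  have "compact (G ` S)" by (rule compact_continuous_image[OF continuous_on_subset[OF assms(1)] assms(2)]) auto
  then have "bounded (G ` S)" by (rule compact_imp_bounded)
  then obtain B where "\<forall>z\<in>G ` S. norm z \<le> B" by (auto simp: bounded_iff)
  then show ?thesis using that by auto
qed

lemma int_grad_zero:
  fixes w :: "'n::euclidean_space \<Rightarrow> real"
  assumes wd: "\<And>x. (w has_derivative (\<lambda>h. G x \<bullet> h)) (at x)" and Gc: "continuous_on UNIV G"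
    and K: "compact K" and w0: "\<And>x. x \<notin> K \<Longrightarrow> w x = 0" and b: "b \<in> Basis"
  shows "integral\<^sup>L lborel (\<lambda>x. G x \<bullet> b) = 0"
proof -
  obtain R0 where R0: "R0 > 0" "\<forall>x\<in>K. norm x \<le> R0"
    using compact_imp_bounded[OF K] bounded_pos by metis
  then have R: "K \<subseteq> cball 0 R0" "R0 \<ge> 0" by auto
  define R where "R = R0"
  note R = R[folded R_def]
  have wc: "continuous_on UNIV w"
    using wd by (meson continuous_at_imp_continuous_on has_derivative_continuous)
  have wint: "integrable lborel w"
  proof -
    have "integrable lborel (\<lambda>x. indicator K x *\<^sub>R w x)"
      by (rule borel_integrable_compact[OF K continuous_on_subset[OF wc]]) auto
    moreover have "(\<lambda>x. indicator K x *\<^sub>R w x) = w" using w0 by (auto simp: fun_eq_iff indicator_def)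
    ultimately show ?thesis by simp
  qed
  have wm: "w \<in> borel_measurable lborel" using borel_measurable_continuous_onI[OF wc] by simp
  define t where "t n = inverse (real (Suc n))" for n
  have tpos: "t n > 0" for n by (simp add: t_def)
  have tle: "t n \<le> 1" for n by (simp add: t_def field_simps)
  define s where "s n x = (w (x + t n *\<^sub>R b) - w x) / t n" for n x
  have trans: "integral\<^sup>L lborel (\<lambda>x. w (x + c)) = integral\<^sup>L lborel w" for c :: 'n
  proof -
    have "integral\<^sup>L lborel w = integral\<^sup>L (distr lborel borel ((+) c)) w" by (simp add: lborel_distr_plus)
    also have "\<dots> = integral\<^sup>L lborel (\<lambda>x. w (c + x))"
      by (rule integral_distr) (use wm in auto)
    finally show ?thesis by (simp add: add.commute)
  qed
  have int_s: "integral\<^sup>L lborel (s n) = 0" for n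
  proof -
    have i2: "integrable lborel (\<lambda>x. w (x + t n *\<^sub>R b))"
    proof -
      have "integrable (distr lborel borel ((+) (t n *\<^sub>R b))) w" using wint by (simp add: lborel_distr_plus)
      then have "integrable lborel (\<lambda>x. w (t n *\<^sub>R b + x))"
        by (subst (asm) integrable_distr_eq) (use wm in auto)
      then show ?thesis by (simp add: add.commute)
    qed
    have "integral\<^sup>L lborel (s n) = (integral\<^sup>L lborel (\<lambda>x. w (x + t n *\<^sub>R b)) - integral\<^sup>L lborel w) / t n"
      unfolding s_def by (simp add: Bochner_Integration.integral_diff[OF i2 wint])
    then show ?thesis using trans by simp
  qed
  have lim: "(\<lambda>n. s n x) \<longlonglongrightarrow> G x \<bullet> b" for x
  proof -
    have d1: "((\<lambda>\<tau>. w (x + \<tau> *\<^sub>R b)) has_real_derivative G x \<bullet> b) (at 0)"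
    proof -
      have "((\<lambda>\<tau>. w (x + \<tau> *\<^sub>R b)) has_derivative (\<lambda>\<tau>. G (x + 0 *\<^sub>R b) \<bullet> (\<tau> *\<^sub>R b))) (at 0)"
        by (rule has_derivative_compose[of "\<lambda>\<tau>. x + \<tau> *\<^sub>R b" _ _ _ w, OF _ wd]) (auto intro!: derivative_eq_intros)
      then show ?thesis unfolding has_field_derivative_def
        by (rule has_derivative_eq_rhs) (auto simp: fun_eq_iff)
    qed
    then have q: "((\<lambda>\<tau>. (w (x + \<tau> *\<^sub>R b) - w x) / \<tau>) \<longlongrightarrow> G x \<bullet> b) (at 0)"
      by (simp add: has_field_derivative_iff)
    have "filterlim t (at 0) sequentially"
    proof (rule tendsto_imp_filterlim_at_right[THEN filterlim_mono])
      show "t \<longlonglongrightarrow> 0" unfolding t_def by (rule LIMSEQ_inverse_real_of_nat)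
      show "\<forall>\<^sub>F n in sequentially. t n > 0" using tpos by simp
    qed (auto intro: at_within_le_at)
    from filterlim_compose[OF q this] show ?thesis by (simp add: s_def[abs_def] o_def)
  qed
  obtain B where B: "\<And>y. y \<in> cball 0 (R + 2) \<Longrightarrow> norm (G y) \<le> B"
    using bounded_on_compact[OF Gc compact_cball] by blast
  have bound: "norm (s n x) \<le> indicator (cball (0::'n) (R + 1)) x *\<^sub>R B" for n x
  proof (cases "x \<in> cball 0 (R + 1)")
    case True
    have nb: "norm b = 1" using b by simp
    have "norm (w (x + t n *\<^sub>R b) - w (x + 0 *\<^sub>R b)) \<le> B * norm (t n - 0)"
    proof (rule field_differentiable_bound[of "{0..1}"])
      fix z :: real assume z: "z \<in> {0..1}"
      have "((\<lambda>\<tau>. w (x + \<tau> *\<^sub>R b)) has_derivative (\<lambda>\<tau>. G (x + z *\<^sub>R b) \<bullet> (\<tau> *\<^sub>R b))) (at z)"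
        by (rule has_derivative_compose[of "\<lambda>\<tau>. x + \<tau> *\<^sub>R b" _ _ _ w, OF _ wd]) (auto intro!: derivative_eq_intros)
      then have "((\<lambda>\<tau>. w (x + \<tau> *\<^sub>R b)) has_derivative (*) (G (x + z *\<^sub>R b) \<bullet> b)) (at z)"
        by (rule has_derivative_eq_rhs) (auto simp: fun_eq_iff)
      then show "((\<lambda>\<tau>. w (x + \<tau> *\<^sub>R b)) has_field_derivative G (x + z *\<^sub>R b) \<bullet> b) (at z within {0..1})"
        unfolding has_field_derivative_def by (rule has_derivative_at_withinI)
      have "norm (x + z *\<^sub>R b) \<le> norm x + norm (z *\<^sub>R b)" by (rule norm_triangle_ineq)
      also have "\<dots> \<le> R + 2" using True z nb by auto
      finally have "x + z *\<^sub>R b \<in> cball 0 (R + 2)" by simp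
      then have "norm (G (x + z *\<^sub>R b)) \<le> B" by (rule B)
      moreover have "\<bar>G (x + z *\<^sub>R b) \<bullet> b\<bar> \<le> norm (G (x + z *\<^sub>R b)) * norm b" by (rule Cauchy_Schwarz_ineq2)
      ultimately show "norm (G (x + z *\<^sub>R b) \<bullet> b) \<le> B" using nb by simp
    qed (use tpos[of n] tle[of n] in auto)
    then have "\<bar>w (x + t n *\<^sub>R b) - w x\<bar> \<le> B * t n" using tpos[of n] by simp
    then show ?thesis using True tpos[of n] by (simp add: s_def divide_le_eq abs_divide mult.commute)
  next
    case False
    have "x \<notin> K" using False R by auto
    moreover have "x + t n *\<^sub>R b \<notin> K"
    proof
      assume "x + t n *\<^sub>R b \<in> K"
      then have "norm (x + t n *\<^sub>R b) \<le> R" using R by auto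
      moreover have "norm x \<le> norm (x + t n *\<^sub>R b) + norm (t n *\<^sub>R b)" by (metis add_diff_cancel norm_triangle_ineq4)
      moreover have "norm (t n *\<^sub>R b) \<le> 1" using b tpos[of n] tle[of n] by simp
      ultimately show False using False by simp
    qed
    ultimately show ?thesis using False by (simp add: s_def w0)
  qed
  have "(\<lambda>n. integral\<^sup>L lborel (s n)) \<longlonglongrightarrow> integral\<^sup>L lborel (\<lambda>x. G x \<bullet> b)"
  proof (rule integral_dominated_convergence[where w="\<lambda>x. indicator (cball (0::'n) (R + 1)) x *\<^sub>R B"])
    show "(\<lambda>x. G x \<bullet> b) \<in> borel_measurable lborel"
      using borel_measurable_continuous_onI[OF continuous_on_inner[OF Gc continuous_on_const]] by simp
    show "s n \<in> borel_measurable lborel" for n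
      unfolding s_def using wm by measurable
    show "integrable lborel (\<lambda>x. indicator (cball (0::'n) (R + 1)) x *\<^sub>R B)"
      by (rule borel_integrable_compact) (auto intro: continuous_on_const)
    show "AE x in lborel. (\<lambda>n. s n x) \<longlonglongrightarrow> G x \<bullet> b" using lim by simp
    show "AE x in lborel. norm (s n x) \<le> indicator (cball (0::'n) (R + 1)) x *\<^sub>R B" for n
      using bound by simp
  qed
  then show ?thesis using int_s by (simp add: LIMSEQ_const_iff)
qed

lemma smooth_cont: "smooth_fun f \<Longrightarrow> continuous_on UNIV f"
  using grad(1) by (meson continuous_at_imp_continuous_on has_derivative_continuous)

lemma test_props:
  fixes \<phi> :: "'n::euclidean_space \<Rightarrow> real"
  assumes "test_fun U \<phi> g"
  shows "continuous_on UNIV \<phi>" "continuous_on UNIV g" "\<And>x. (\<phi> has_derivative (\<lambda>h. g x \<bullet> h)) (at x)"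
    "\<exists>K. compact K \<and> K \<subseteq> U \<and> (\<forall>x. x \<notin> K \<longrightarrow> \<phi> x = 0 \<and> g x = 0)"
proof -
  have sm: "smooth_fun \<phi>" and d: "\<And>x. (\<phi> has_derivative (\<lambda>h. g x \<bullet> h)) (at x)"
    and K: "\<exists>K. compact K \<and> K \<subseteq> U \<and> (\<forall>x. x \<notin> K \<longrightarrow> \<phi> x = 0)"
    using assms by (auto simp: test_fun_def)
  show "\<And>x. (\<phi> has_derivative (\<lambda>h. g x \<bullet> h)) (at x)" by (rule d)
  show "continuous_on UNIV \<phi>" by (rule smooth_cont[OF sm])
  have gg: "g x = grad \<phi> x" for x
  proof -
    have "(\<lambda>h. g x \<bullet> h) = (\<lambda>h. grad \<phi> x \<bullet> h)" by (rule has_derivative_unique[OF d grad(1)[OF sm]])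
    then have "g x \<bullet> (g x - grad \<phi> x) = grad \<phi> x \<bullet> (g x - grad \<phi> x)" by metis
    then have "(g x - grad \<phi> x) \<bullet> (g x - grad \<phi> x) = 0" by (simp add: inner_diff_left)
    then show ?thesis by simp
  qed
  have "continuous_on UNIV (\<lambda>x. \<Sum>b\<in>Basis. (grad \<phi> x \<bullet> b) *\<^sub>R b)"
    by (intro continuous_intros smooth_cont grad(2)[OF sm])
  then show "continuous_on UNIV g" by (simp add: gg[abs_def] euclidean_representation)
  from K obtain K where K: "compact K" "K \<subseteq> U" "\<forall>x. x \<notin> K \<longrightarrow> \<phi> x = 0" by blast
  have "g x = 0" if "x \<notin> K" for x
    by (rule deriv_zero_outside[OF d compact_imp_closed[OF K(1)]]) (use K that in auto)
  then show "\<exists>K. compact K \<and> K \<subseteq> U \<and> (\<forall>x. x \<notin> K \<longrightarrow> \<phi> x = 0 \<and> g x = 0)" using K by blast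
qed

lemma cc_integrable:
  fixes F :: "'n::euclidean_space \<Rightarrow> 'm::euclidean_space"
  assumes "continuous_on UNIV F" "compact K" "\<And>x. x \<notin> K \<Longrightarrow> F x = 0"
  shows "integrable lborel F"
proof -
  have "integrable lborel (\<lambda>x. indicator K x *\<^sub>R F x)"
    by (rule borel_integrable_compact[OF assms(2) continuous_on_subset[OF assms(1)]]) auto
  moreover have "(\<lambda>x. indicator K x *\<^sub>R F x) = F" using assms(3) by (auto simp: fun_eq_iff indicator_def)
  ultimately show ?thesis by simp
qed

lemma cc_set_integral:
  fixes F :: "'n::euclidean_space \<Rightarrow> 'm::euclidean_space"
  assumes "continuous_on UNIV F" "compact K" "\<And>x. x \<notin> K \<Longrightarrow> F x = 0" "K \<subseteq> U"
  shows "set_lebesgue_integral lebesgue U F = integral\<^sup>L lborel F"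
    "set_integrable lebesgue U F"
proof -
  have e: "(\<lambda>x. indicator U x *\<^sub>R F x) = F" using assms(3,4) by (auto simp: fun_eq_iff indicator_def)
  have m: "F \<in> borel_measurable lborel" using borel_measurable_continuous_onI[OF assms(1)] by simp
  show "set_lebesgue_integral lebesgue U F = integral\<^sup>L lborel F"
    unfolding set_lebesgue_integral_def e by (rule integral_completion[OF m])
  show "set_integrable lebesgue U F"
    unfolding set_integrable_def e using integrable_completion[OF m] cc_integrable[OF assms(1-3)] by simp
qed

lemma ibp:
  fixes \<phi> \<psi> :: "'n::euclidean_space \<Rightarrow> real"
  assumes "test_fun U \<phi> g" "test_fun U \<psi> k"
  shows "set_lebesgue_integral lebesgue U (\<lambda>x. \<phi> x *\<^sub>R k x) = - set_lebesgue_integral lebesgue U (\<lambda>x. \<psi> x *\<^sub>R g x)"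
proof -
  note A = test_props[OF assms(1)] and B = test_props[OF assms(2)]
  obtain K where K: "compact K" "K \<subseteq> U" "\<forall>x. x \<notin> K \<longrightarrow> \<phi> x = 0 \<and> g x = 0" using A(4) by blast
  have c1: "continuous_on UNIV (\<lambda>x. \<phi> x *\<^sub>R k x)" using A B by (intro continuous_intros)
  have c2: "continuous_on UNIV (\<lambda>x. \<psi> x *\<^sub>R g x)" using A B by (intro continuous_intros)
  have z1: "\<And>x. x \<notin> K \<Longrightarrow> \<phi> x *\<^sub>R k x = 0" and z2: "\<And>x. x \<notin> K \<Longrightarrow> \<psi> x *\<^sub>R g x = 0" using K by auto
  have i1: "integrable lborel (\<lambda>x. \<phi> x *\<^sub>R k x)" by (rule cc_integrable[OF c1 K(1) z1])
  have i2: "integrable lborel (\<lambda>x. \<psi> x *\<^sub>R g x)" by (rule cc_integrable[OF c2 K(1) z2])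
  have wd: "((\<lambda>x. \<phi> x * \<psi> x) has_derivative (\<lambda>h. (\<phi> x *\<^sub>R k x + \<psi> x *\<^sub>R g x) \<bullet> h)) (at x)" for x
    by (rule has_derivative_eq_rhs[OF has_derivative_mult[OF A(3) B(3)]]) (auto simp: fun_eq_iff inner_add_left)
  have "integral\<^sup>L lborel (\<lambda>x. \<phi> x *\<^sub>R k x) + integral\<^sup>L lborel (\<lambda>x. \<psi> x *\<^sub>R g x) = 0"
  proof (rule euclidean_eqI)
    fix b :: 'n assume b: "b \<in> Basis"
    have "(integral\<^sup>L lborel (\<lambda>x. \<phi> x *\<^sub>R k x) + integral\<^sup>L lborel (\<lambda>x. \<psi> x *\<^sub>R g x)) \<bullet> b
        = integral\<^sup>L lborel (\<lambda>x. \<phi> x *\<^sub>R k x + \<psi> x *\<^sub>R g x) \<bullet> b"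
      by (simp add: Bochner_Integration.integral_add[OF i1 i2])
    also have "\<dots> = integral\<^sup>L lborel (\<lambda>x. (\<phi> x *\<^sub>R k x + \<psi> x *\<^sub>R g x) \<bullet> b)"
      by (rule integral_inner_left[symmetric]) (use i1 i2 in auto)
    also have "\<dots> = 0"
      by (rule int_grad_zero[OF wd _ K(1) _ b]) (use c1 c2 K in \<open>auto intro: continuous_intros\<close>)
    finally show "(integral\<^sup>L lborel (\<lambda>x. \<phi> x *\<^sub>R k x) + integral\<^sup>L lborel (\<lambda>x. \<psi> x *\<^sub>R g x)) \<bullet> b = 0 \<bullet> b" by simp
  qed
  moreover have "set_lebesgue_integral lebesgue U (\<lambda>x. \<phi> x *\<^sub>R k x) = integral\<^sup>L lborel (\<lambda>x. \<phi> x *\<^sub>R k x)"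
    by (rule cc_set_integral(1)[OF c1 K(1) z1 K(2)])
  moreover have "set_lebesgue_integral lebesgue U (\<lambda>x. \<psi> x *\<^sub>R g x) = integral\<^sup>L lborel (\<lambda>x. \<psi> x *\<^sub>R g x)"
    by (rule cc_set_integral(1)[OF c2 K(1) z2 K(2)])
  ultimately show ?thesis by (simp add: eq_neg_iff_add_eq_0)
qed

lemma bump_test:
  fixes c :: "'n::euclidean_space"
  assumes "\<forall>y. (y - c) \<bullet> (y - c) \<le> s \<longrightarrow> y \<in> U"
  shows "test_fun U (bump s c) (grad (bump s c))"
  unfolding test_fun_def
proof (intro conjI allI exI[of _ "{y. (y - c) \<bullet> (y - c) \<le> s}"])
  show "smooth_fun (bump s c)" by (rule smooth_bump)
  show "\<And>x. (bump s c has_derivative (\<bullet>) (grad (bump s c) x)) (at x)" using grad(1)[OF smooth_bump] by blast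
  have "closed {y. (y - c) \<bullet> (y - c) \<le> s}"
    by (intro closed_Collect_le continuous_intros)
  moreover have "bounded {y. (y - c) \<bullet> (y - c) \<le> s}"
  proof (rule bounded_subset[OF bounded_cball[of c "sqrt \<bar>s\<bar>"]])
    show "{y. (y - c) \<bullet> (y - c) \<le> s} \<subseteq> cball c (sqrt \<bar>s\<bar>)"
    proof
      fix y assume "y \<in> {y. (y - c) \<bullet> (y - c) \<le> s}"
      then have "(norm (y - c))\<^sup>2 \<le> \<bar>s\<bar>" by (simp add: power2_norm_eq_inner)
      then have "norm (y - c) \<le> sqrt \<bar>s\<bar>" using real_le_rsqrt by blast
      then show "y \<in> cball c (sqrt \<bar>s\<bar>)" by (simp add: dist_norm norm_minus_commute)
    qed
  qed
  ultimately show "compact {y. (y - c) \<bullet> (y - c) \<le> s}" by (simp add: compact_eq_bounded_closed)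
  show "{y. (y - c) \<bullet> (y - c) \<le> s} \<subseteq> U" using assms by auto
  show "x \<notin> {y. (y - c) \<bullet> (y - c) \<le> s} \<longrightarrow> bump s c x = 0" for x
    by (auto simp: bump_def psi_zero)
qed

lemma test_loc_int:
  fixes F :: "'n::euclidean_space \<Rightarrow> 'm::euclidean_space"
  assumes "continuous_on UNIV F" "compact K" "\<And>x. x \<notin> K \<Longrightarrow> F x = 0"
  shows "loc_integrable U F"
  unfolding loc_integrable_def
proof (intro allI impI)
  fix K' assume "compact K' \<and> K' \<subseteq> U"
  then have "K' \<in> sets lebesgue" using fmeasurableD[OF lmeasurable_compact] by blast
  moreover have "integrable lebesgue F"
    using integrable_completion[of F lborel] borel_measurable_continuous_onI[OF assms(1)] cc_integrable[OF assms] by simp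
  ultimately show "set_integrable lebesgue K' F" unfolding set_integrable_def
    by (rule integrable_mult_indicator)
qed

lemma test_L2:
  fixes F :: "'n::euclidean_space \<Rightarrow> 'm::euclidean_space"
  assumes "continuous_on UNIV F" "compact K" "\<And>x. x \<notin> K \<Longrightarrow> F x = 0" "K \<subseteq> U"
  shows "L2 U F"
  unfolding L2_def
proof
  have e: "(\<lambda>x. indicator U x *\<^sub>R F x) = F" using assms(3,4) by (auto simp: fun_eq_iff indicator_def)
  show "set_borel_measurable lebesgue U F" unfolding set_borel_measurable_def e
    using borel_measurable_continuous_onI[OF assms(1)] by (auto intro: measurable_completion)
  show "set_integrable lebesgue U (\<lambda>x. (norm (F x))\<^sup>2)"
    by (rule cc_set_integral(2)[OF _ assms(2) _ assms(4)]) (use assms in \<open>auto intro: continuous_intros\<close>)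
qed

lemma test_H01:
  fixes \<phi> :: "'n::euclidean_space \<Rightarrow> real"
  assumes "test_fun U \<phi> g"
  shows "H01 U \<phi>" "is_weak_grad U \<phi> g" "L2 U \<phi>" "L2 U g"
proof -
  note A = test_props[OF assms]
  obtain K where K: "compact K" "K \<subseteq> U" "\<forall>x. x \<notin> K \<longrightarrow> \<phi> x = 0 \<and> g x = 0" using A(4) by blast
  show L: "L2 U \<phi>" "L2 U g" using test_L2[OF A(1) K(1) _ K(2)] test_L2[OF A(2) K(1) _ K(2)] K(3) by auto
  show W: "is_weak_grad U \<phi> g"
    unfolding is_weak_grad_def
    using test_loc_int[OF A(1) K(1)] test_loc_int[OF A(2) K(1)] K(3) ibp[OF assms] by auto
  show "H01 U \<phi>"
    unfolding H01_def
    apply (intro conjI L exI[of _ g] W exI[of _ "\<lambda>n. \<phi>"] exI[of _ "\<lambda>n. g"] allI assms)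
    by (simp_all add: L2norm_def)
qed

lemma L2norm_pos:
  fixes c :: "'n::euclidean_space"
  assumes "\<forall>y. (y - c) \<bullet> (y - c) \<le> s \<longrightarrow> y \<in> U" "s > 0"
  shows "L2norm U (bump s c) > 0"
proof -
  note T = bump_test[OF assms(1)]
  note A = test_props[OF T]
  obtain K where K: "compact K" "K \<subseteq> U" "\<forall>x. x \<notin> K \<longrightarrow> bump s c x = 0 \<and> grad (bump s c) x = 0" using A(4) by blast
  have c: "continuous_on UNIV (\<lambda>x. (norm (bump s c x))\<^sup>2)" using A by (intro continuous_intros)
  have e: "set_lebesgue_integral lebesgue U (\<lambda>x. (norm (bump s c x))\<^sup>2) = integral\<^sup>L lborel (\<lambda>x. (norm (bump s c x))\<^sup>2)"
    by (rule cc_set_integral(1)[OF c K(1) _ K(2)]) (use K in auto)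
  have i: "integrable lborel (\<lambda>x. (norm (bump s c x))\<^sup>2)" by (rule cc_integrable[OF c K(1)]) (use K in auto)
  have "integral\<^sup>L lborel (\<lambda>x. (norm (bump s c x))\<^sup>2) \<noteq> 0"
  proof
    assume "integral\<^sup>L lborel (\<lambda>x. (norm (bump s c x))\<^sup>2) = 0"
    then have "AE x in lborel. (norm (bump s c x))\<^sup>2 = 0"
      using integral_nonneg_eq_0_iff_AE[OF i] by simp
    then obtain N where N: "{x \<in> space lborel. \<not> (norm (bump s c x))\<^sup>2 = 0} \<subseteq> N" "emeasure lborel N = 0" "N \<in> sets lborel"
      by (rule AE_E)
    have "ball c (sqrt s) \<subseteq> N"
    proof
      fix x assume "x \<in> ball c (sqrt s)"
      then have "norm (x - c) < sqrt s" by (simp add: dist_norm norm_minus_commute)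
      then have "(norm (x - c))\<^sup>2 < (sqrt s)\<^sup>2" by (intro power_strict_mono) auto
      then have "(norm (x - c))\<^sup>2 < s" using assms(2) by simp
      then have "(x - c) \<bullet> (x - c) < s" by (simp add: power2_norm_eq_inner)
      then have "bump s c x > 0" by (simp add: bump_def psi_pos)
      then show "x \<in> N" using N(1) by auto
    qed
    then have "emeasure lborel (ball c (sqrt s)) \<le> emeasure lborel N" by (rule emeasure_mono) (use N in auto)
    then have "emeasure lborel (ball c (sqrt s)) = 0" using N(2) by simp
    then have "Sigma_Algebra.measure lborel (ball c (sqrt s)) = 0" by (simp add: measure_def)
    moreover have "Sigma_Algebra.measure lborel (ball c (sqrt s)) > 0" using content_ball_pos[of "sqrt s" c] assms by simp
    ultimately show False by simp
  qed
  moreover have "integral\<^sup>L lborel (\<lambda>x. (norm (bump s c x))\<^sup>2) \<ge> 0" by simp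
  ultimately have "integral\<^sup>L lborel (\<lambda>x. (norm (bump s c x))\<^sup>2) > 0" by linarith
  then show ?thesis unfolding L2norm_def e by simp
qed

lemma set_integral_snd:
  fixes F :: "'n::euclidean_space \<Rightarrow> 'a::euclidean_space \<times> 'b::euclidean_space"
  assumes "set_integrable lebesgue U F"
  shows "set_lebesgue_integral lebesgue U (\<lambda>x. snd (F x)) = snd (set_lebesgue_integral lebesgue U F)"
proof -
  have "set_lebesgue_integral lebesgue U (\<lambda>x. snd (F x)) = integral\<^sup>L lebesgue (\<lambda>x. snd (indicator U x *\<^sub>R F x))"
    unfolding set_lebesgue_integral_def by simp
  also have "\<dots> = snd (integral\<^sup>L lebesgue (\<lambda>x. indicator U x *\<^sub>R F x))"
    by (rule integral_bounded_linear[OF bounded_linear_snd]) (use assms in \<open>simp add: set_integrable_def\<close>)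
  finally show ?thesis by (simp add: set_lebesgue_integral_def)
qed

lemma exists_pos:
  fixes \<omega>1 :: "'a::euclidean_space set" and \<omega>2 :: "'b::euclidean_space set"
  assumes "open \<omega>1" "open \<omega>2" "\<omega>1 \<times> \<omega>2 \<noteq> {}"
  shows "\<exists>v. H01 (\<omega>1 \<times> \<omega>2) v \<and> H01_X2 \<omega>1 \<omega>2 v \<and> L2norm (\<omega>1 \<times> \<omega>2) v > 0"
proof -
  define U where "U = \<omega>1 \<times> \<omega>2"
  have oU: "open U" unfolding U_def using assms by (simp add: open_Times)
  obtain c where cU: "c \<in> U" using assms unfolding U_def by blast
  obtain r where r: "r > 0" "cball c r \<subseteq> U" using open_contains_cball[of U] oU cU by blast
  define s where "s = r\<^sup>2"
  have spos: "s > 0" using r by (simp add: s_def)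
  have cond: "\<forall>y. (y - c) \<bullet> (y - c) \<le> s \<longrightarrow> y \<in> U"
  proof (intro allI impI)
    fix y assume "(y - c) \<bullet> (y - c) \<le> s"
    then have "(norm (y - c))\<^sup>2 \<le> r\<^sup>2" by (simp add: s_def power2_norm_eq_inner)
    then have "norm (y - c) \<le> r" using r(1) by (simp add: power2_le_iff_abs_le)
    then show "y \<in> U" using r(2) by (auto simp: dist_norm norm_minus_commute)
  qed
  define v where "v = bump s c"
  define g where "g = grad (bump s c)"
  have T: "test_fun U v g" unfolding v_def g_def by (rule bump_test[OF cond])
  note H = test_H01[OF T]
  note A = test_props[OF T]
  obtain K where K: "compact K" "K \<subseteq> U" "\<forall>x. x \<notin> K \<longrightarrow> v x = 0 \<and> g x = 0" using A(4) by blast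
  have pos: "L2norm U v > 0" unfolding v_def by (rule L2norm_pos[OF cond spos])
  obtain c1 c2 where c: "c = (c1, c2)" by fastforce
  have sgc: "continuous_on UNIV (\<lambda>x. snd (g x))" using A(2) by (intro continuous_intros)
  have X2: "H01_X2 \<omega>1 \<omega>2 v"
    unfolding H01_X2_def U_def[symmetric]
  proof (intro conjI exI[of _ "\<lambda>x. snd (g x)"])
    show "L2 U v" by (rule H(3))
    show "L2 U (\<lambda>x. snd (g x))" by (rule test_L2[OF sgc K(1) _ K(2)]) (use K in auto)
    show "is_weak_grad2 U v (\<lambda>x. snd (g x))"
      unfolding is_weak_grad2_def
    proof (intro conjI allI impI)
      show "loc_integrable U v" using H(2) by (simp add: is_weak_grad_def)
      show "loc_integrable U (\<lambda>x. snd (g x))" by (rule test_loc_int[OF sgc K(1)]) (use K in auto)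
      fix \<psi> k assume Tk: "test_fun U \<psi> k"
      note B = test_props[OF Tk]
      have i1: "set_integrable lebesgue U (\<lambda>x. v x *\<^sub>R k x)"
        by (rule cc_set_integral(2)[OF _ K(1) _ K(2)]) (use A B K in \<open>auto intro: continuous_intros\<close>)
      have i2: "set_integrable lebesgue U (\<lambda>x. \<psi> x *\<^sub>R g x)"
        by (rule cc_set_integral(2)[OF _ K(1) _ K(2)]) (use A B K in \<open>auto intro: continuous_intros\<close>)
      have "set_lebesgue_integral lebesgue U (\<lambda>x. v x *\<^sub>R snd (k x)) = snd (set_lebesgue_integral lebesgue U (\<lambda>x. v x *\<^sub>R k x))"
        using set_integral_snd[OF i1] by simp
      also have "\<dots> = snd (- set_lebesgue_integral lebesgue U (\<lambda>x. \<psi> x *\<^sub>R g x))"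
        using ibp[OF T Tk] by simp
      also have "\<dots> = - set_lebesgue_integral lebesgue U (\<lambda>x. \<psi> x *\<^sub>R snd (g x))"
        using set_integral_snd[OF i2] by simp
      finally show "set_lebesgue_integral lebesgue U (\<lambda>x. v x *\<^sub>R snd (k x)) = - set_lebesgue_integral lebesgue U (\<lambda>x. \<psi> x *\<^sub>R snd (g x))" .
    qed
    show "AE X1 in lebesgue. X1 \<in> \<omega>1 \<longrightarrow> H01 \<omega>2 (\<lambda>X2. v (X1, X2))"
    proof (rule AE_I2, rule impI)
      fix X1 assume "X1 \<in> \<omega>1"
      define s' where "s' = s - (X1 - c1) \<bullet> (X1 - c1)"
      have eq: "(\<lambda>X2. v (X1, X2)) = bump s' c2"
        by (auto simp: fun_eq_iff v_def bump_def s'_def c algebra_simps)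
      have cond2: "\<forall>y. (y - c2) \<bullet> (y - c2) \<le> s' \<longrightarrow> y \<in> \<omega>2"
      proof (intro allI impI)
        fix y assume "(y - c2) \<bullet> (y - c2) \<le> s'"
        then have "((X1, y) - c) \<bullet> ((X1, y) - c) \<le> s" by (simp add: s'_def c)
        then have "(X1, y) \<in> U" using cond by blast
        then show "y \<in> \<omega>2" by (simp add: U_def)
      qed
      show "H01 \<omega>2 (\<lambda>X2. v (X1, X2))" unfolding eq by (rule test_H01(1)[OF bump_test[OF cond2]])
    qed
  qed
  show ?thesis using H(1) X2 pos unfolding U_def by blast
qed

lemma loc_int_measurable:
  fixes G :: "'n::euclidean_space \<Rightarrow> 'm::euclidean_space"
  assumes "open U" "bounded U" "loc_integrable U G"
  shows "set_borel_measurable lebesgue U G"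
proof -
  define K where "K n = {x. infdist x (- U) \<ge> 1 / real (Suc n)} \<inter> cball 0 (real n)" for n
  have ne: "- U \<noteq> {}"
  proof
    assume "- U = {}"
    then have "U = UNIV" by auto
    then show False using assms(2) not_bounded_UNIV by simp
  qed
  have KU: "K n \<subseteq> U" for n
  proof
    fix x assume x: "x \<in> K n"
    show "x \<in> U"
    proof (rule ccontr)
      assume "x \<notin> U"
      then have "infdist x (- U) = 0" by (simp add: infdist_zero)
      then show False using x by (simp add: K_def)
    qed
  qed
  have Kc: "compact (K n)" for n
  proof -
    have "K n = cball 0 (real n) \<inter> {x. 1 / real (Suc n) \<le> infdist x (- U)}" by (auto simp: K_def)
    moreover have "closed {x. 1 / real (Suc n) \<le> infdist x (- U)}"
      by (intro closed_Collect_le continuous_on_const continuous_on_infdist continuous_on_id)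
    ultimately show ?thesis by (simp add: compact_Int_closed)
  qed
  have meas: "(\<lambda>x. indicator (K n) x *\<^sub>R G x) \<in> borel_measurable lebesgue" for n
  proof -
    have "set_integrable lebesgue (K n) G" using assms(3) Kc KU unfolding loc_integrable_def by simp
    then show ?thesis unfolding set_integrable_def by (rule borel_measurable_integrable)
  qed
  have lim: "(\<lambda>n. indicator (K n) x *\<^sub>R G x) \<longlonglongrightarrow> indicator U x *\<^sub>R G x" for x
  proof (cases "x \<in> U")
    case True
    have "infdist x (- U) > 0"
      by (rule infdist_pos_not_in_closed) (use assms(1) ne True in auto)
    from reals_Archimedean[OF this] obtain N1 where "inverse (real (Suc N1)) < infdist x (- U)"
      by blast
    then have N1: "1 / real (Suc N1) < infdist x (- U)" by (simp add: inverse_eq_divide)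
    obtain N2 where N2: "norm x \<le> real N2" using real_arch_simple by blast
    have "eventually (\<lambda>n. x \<in> K n) sequentially"
      unfolding eventually_sequentially
    proof (intro exI allI impI)
      fix n assume n: "n \<ge> max N1 N2"
      have "1 / real (Suc n) \<le> 1 / real (Suc N1)" using n by (intro divide_left_mono) auto
      moreover have "norm x \<le> real n" using N2 n by linarith
      ultimately show "x \<in> K n" using N1 by (simp add: K_def)
    qed
    then have "eventually (\<lambda>n. indicator (K n) x *\<^sub>R G x = indicator U x *\<^sub>R G x) sequentially"
      by (rule eventually_mono) (use True in simp)
    then show ?thesis by (rule tendsto_eventually)
  next
    case False
    then have "x \<notin> K n" for n using KU by auto
    then show ?thesis using False by simp
  qed
  show ?thesis unfolding set_borel_measurable_def
    by (rule borel_measurable_LIMSEQ_metric[OF meas lim])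
qed

lemma sq_expand:
  fixes a b t :: real assumes t: "t > 0"
  shows "(sqrt t * \<bar>a\<bar> - \<bar>b\<bar> / sqrt t)\<^sup>2 = t * a\<^sup>2 + b\<^sup>2 / t - 2 * \<bar>a * b\<bar>"
proof -
  obtain r where r: "r > 0" "t = r * r" using t by (intro that[of "sqrt t"]) auto
  have s: "sqrt t = r" using r by simp
  show ?thesis unfolding s r(2) using r(1)
    by (simp add: power2_eq_square field_simps abs_mult abs_mult_self_eq)
qed
lemma abs_prod_le: "\<bar>a::real\<bar> * \<bar>b\<bar> \<le> a*a + b*b"
proof -
  have "0 \<le> (\<bar>a\<bar> - \<bar>b\<bar>) * (\<bar>a\<bar> - \<bar>b\<bar>)" by simp
  then have "2*(\<bar>a\<bar>*\<bar>b\<bar>) \<le> \<bar>a\<bar>*\<bar>a\<bar> + \<bar>b\<bar>*\<bar>b\<bar>" by (simp add: algebra_simps)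
  moreover have "0 \<le> \<bar>a\<bar>*\<bar>b\<bar>" by simp
  ultimately show ?thesis using abs_mult_self_eq[of a] abs_mult_self_eq[of b] by linarith
qed

lemma cs_real:
  fixes I A B :: real
  assumes "A \<ge> 0" "B \<ge> 0" "\<And>t. t > 0 \<Longrightarrow> 2 * I \<le> t * A + B / t"
  shows "I \<le> sqrt A * sqrt B"
proof (cases "A > 0 \<and> B > 0")
  case True
  have "2 * I \<le> (sqrt B / sqrt A) * A + B / (sqrt B / sqrt A)" using True by (intro assms(3)) auto
  also have "\<dots> = 2 * (sqrt A * sqrt B)"
    using True by (simp add: field_simps)
  finally show ?thesis by simp
next
  case False
  show ?thesis
  proof (rule ccontr)
    assume "\<not> I \<le> sqrt A * sqrt B"
    then have Ip: "I > 0" using False assms by auto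
    show False
    proof (cases "A = 0")
      case True
      have "2 * I \<le> ((B + 1) / I) * A + B / ((B + 1) / I)" using Ip assms by (intro assms(3)) auto
      also have "\<dots> = B * I / (B + 1)" using True Ip assms by (simp add: field_simps)
      also have "\<dots> < I" using Ip assms by (simp add: field_simps)
      finally show False using Ip by simp
    next
      case False
      then have "B = 0" using \<open>\<not> (A > 0 \<and> B > 0)\<close> assms by auto
      have "2 * I \<le> (I / (A + 1)) * A + B / (I / (A + 1))" using Ip assms by (intro assms(3)) auto
      also have "\<dots> = I * A / (A + 1)" using \<open>B = 0\<close> by simp
      also have "\<dots> < I" using Ip assms by (simp add: field_simps)
      finally show False using Ip by simp
    qed
  qed
qed

lemma set_int_nonneg: "(\<And>x. x \<in> A \<Longrightarrow> 0 \<le> f x) \<Longrightarrow> 0 \<le> set_lebesgue_integral M A (f :: _ \<Rightarrow> real)"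
  unfolding set_lebesgue_integral_def by (rule integral_nonneg_AE) (auto simp: indicator_def)

lemma L2_sq_nonneg: "0 \<le> set_lebesgue_integral lebesgue U (\<lambda>x. (norm (F x))\<^sup>2)"
  by (rule set_int_nonneg) simp

lemma L2norm_sq: "(L2norm U F)\<^sup>2 = set_lebesgue_integral lebesgue U (\<lambda>x. (norm (F x))\<^sup>2)"
  unfolding L2norm_def using L2_sq_nonneg by simp

lemma L2norm_nonneg: "L2norm U F \<ge> 0"
  unfolding L2norm_def using L2_sq_nonneg by simp

lemma cauchy_schwarz_L2:
  fixes f g :: "'n::euclidean_space \<Rightarrow> real"
  assumes f: "L2 U f" and g: "L2 U g"
  shows "set_integrable lebesgue U (\<lambda>x. f x * g x)"
    "set_integrable lebesgue U (\<lambda>x. \<bar>f x * g x\<bar>)"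
    "set_lebesgue_integral lebesgue U (\<lambda>x. \<bar>f x * g x\<bar>) \<le> L2norm U f * L2norm U g"
    "set_lebesgue_integral lebesgue U (\<lambda>x. f x * g x) \<le> L2norm U f * L2norm U g"
proof -
  have fm: "set_borel_measurable lebesgue U f" and fi: "set_integrable lebesgue U (\<lambda>x. (f x)\<^sup>2)"
    using f by (auto simp: L2_def)
  have gm: "set_borel_measurable lebesgue U g" and gi: "set_integrable lebesgue U (\<lambda>x. (g x)\<^sup>2)"
    using g by (auto simp: L2_def)
  have m: "set_borel_measurable lebesgue U (\<lambda>x. f x * g x)"
    using fm gm unfolding set_borel_measurable_def
    by (rule borel_measurable_times[THEN measurable_cong[THEN iffD1, rotated]]) (auto simp: indicator_def)
  have sum_int: "set_integrable lebesgue U (\<lambda>x. t * (f x)\<^sup>2 + (g x)\<^sup>2 / t)" for t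
    using fi gi by (intro set_integral_add(1) set_integrable_mult_right set_integrable_divide)
  show i: "set_integrable lebesgue U (\<lambda>x. f x * g x)"
    by (rule set_integrable_bound[OF sum_int[of 1] m]) (auto intro!: AE_I2 simp: abs_mult abs_prod_le power2_eq_square)
  then show ia: "set_integrable lebesgue U (\<lambda>x. \<bar>f x * g x\<bar>)"
    by (rule set_integrable_abs)
  have A: "set_lebesgue_integral lebesgue U (\<lambda>x. (f x)\<^sup>2) = (L2norm U f)\<^sup>2"
    using L2norm_sq[of U f] by simp
  have B: "set_lebesgue_integral lebesgue U (\<lambda>x. (g x)\<^sup>2) = (L2norm U g)\<^sup>2"
    using L2norm_sq[of U g] by simp
  have "set_lebesgue_integral lebesgue U (\<lambda>x. \<bar>f x * g x\<bar>) \<le> sqrt ((L2norm U f)\<^sup>2) * sqrt ((L2norm U g)\<^sup>2)"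
  proof (rule cs_real)
    fix t :: real assume t: "t > 0"
    have "2 * set_lebesgue_integral lebesgue U (\<lambda>x. \<bar>f x * g x\<bar>) = set_lebesgue_integral lebesgue U (\<lambda>x. 2 * \<bar>f x * g x\<bar>)"
      by (simp add: set_integral_mult_right)
    also have "\<dots> \<le> set_lebesgue_integral lebesgue U (\<lambda>x. t * (f x)\<^sup>2 + (g x)\<^sup>2 / t)"
    proof (rule set_integral_mono)
      show "set_integrable lebesgue U (\<lambda>x. 2 * \<bar>f x * g x\<bar>)" using ia by (rule set_integrable_mult_right)
      show "set_integrable lebesgue U (\<lambda>x. t * (f x)\<^sup>2 + (g x)\<^sup>2 / t)" by (rule sum_int)
      fix x
      have "0 \<le> (sqrt t * \<bar>f x\<bar> - \<bar>g x\<bar> / sqrt t)\<^sup>2" by simp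
      also have "\<dots> = t * (f x)\<^sup>2 + (g x)\<^sup>2 / t - 2 * \<bar>f x * g x\<bar>"
        by (rule sq_expand[OF t])
      finally show "2 * \<bar>f x * g x\<bar> \<le> t * (f x)\<^sup>2 + (g x)\<^sup>2 / t" by simp
    qed
    also have "\<dots> = t * (L2norm U f)\<^sup>2 + (L2norm U g)\<^sup>2 / t"
      using fi gi A B by (simp add: set_integral_add set_integrable_mult_right set_integrable_divide set_integral_mult_right set_integral_divide_zero)
    finally show "2 * set_lebesgue_integral lebesgue U (\<lambda>x. \<bar>f x * g x\<bar>) \<le> t * (L2norm U f)\<^sup>2 + (L2norm U g)\<^sup>2 / t" .
  qed auto
  then show c: "set_lebesgue_integral lebesgue U (\<lambda>x. \<bar>f x * g x\<bar>) \<le> L2norm U f * L2norm U g"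
    using L2norm_nonneg[of U f] L2norm_nonneg[of U g] by simp
  have "set_lebesgue_integral lebesgue U (\<lambda>x. f x * g x) \<le> set_lebesgue_integral lebesgue U (\<lambda>x. \<bar>f x * g x\<bar>)"
    by (rule set_integral_mono[OF i ia]) simp
  then show "set_lebesgue_integral lebesgue U (\<lambda>x. f x * g x) \<le> L2norm U f * L2norm U g" using c by linarith
qed

lemma L2_one:
  assumes "U \<in> sets lebesgue" "emeasure lebesgue U < \<infinity>"
  shows "L2 U (\<lambda>x::'n::euclidean_space. 1::real)" "L2norm U (\<lambda>x::'n. 1::real) = sqrt (Sigma_Algebra.measure lebesgue U)"
proof -
  have i: "integrable lebesgue (indicator U :: 'n \<Rightarrow> real)" by (rule integrable_real_indicator[OF assms])
  show "L2 U (\<lambda>x::'n. 1::real)"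
    unfolding L2_def set_borel_measurable_def set_integrable_def
    using i assms(1) by (simp add: borel_measurable_indicator)
  show "L2norm U (\<lambda>x::'n. 1::real) = sqrt (Sigma_Algebra.measure lebesgue U)"
    unfolding L2norm_def set_lebesgue_integral_def by (simp add: integral_indicator)
qed

lemma beta_L2:
  fixes u :: "'n::euclidean_space \<Rightarrow> real" and \<beta> :: "real \<Rightarrow> real"
  assumes U: "U \<in> sets lebesgue" "emeasure lebesgue U < \<infinity>" and u: "L2 U u"
    and \<beta>: "continuous_on UNIV \<beta>" "\<beta> 0 = 0" "\<And>s. \<bar>\<beta> s\<bar> \<le> M * (1 + \<bar>s\<bar>)"
  shows "L2 U (\<lambda>x. \<beta> (u x))" "L2norm U (\<lambda>x. \<beta> (u x)) \<le> M * (sqrt (Sigma_Algebra.measure lebesgue U) + L2norm U u)"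
proof -
  have M: "M \<ge> 0" using \<beta>(3)[of 0] \<beta>(2) by simp
  note one = L2_one[OF U]
  have um: "(\<lambda>x. indicator U x *\<^sub>R u x) \<in> borel_measurable lebesgue"
    using u by (simp add: L2_def set_borel_measurable_def)
  have ui: "set_integrable lebesgue U (\<lambda>x. (u x)\<^sup>2)" using u by (simp add: L2_def)
  have bm: "set_borel_measurable lebesgue U (\<lambda>x. \<beta> (u x))"
  proof -
    have "(\<lambda>x. \<beta> (indicator U x *\<^sub>R u x)) \<in> borel_measurable lebesgue"
      using measurable_compose[OF um borel_measurable_continuous_onI[OF \<beta>(1)]] by (simp add: o_def)
    moreover have "(\<lambda>x. \<beta> (indicator U x *\<^sub>R u x)) = (\<lambda>x. indicator U x *\<^sub>R \<beta> (u x))"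
      using \<beta>(2) by (auto simp: fun_eq_iff indicator_def)
    ultimately show ?thesis unfolding set_borel_measurable_def by simp
  qed
  have b2m: "set_borel_measurable lebesgue U (\<lambda>x. (\<beta> (u x))\<^sup>2)"
  proof -
    have "(\<lambda>x. (indicator U x *\<^sub>R \<beta> (u x))\<^sup>2) \<in> borel_measurable lebesgue"
      using borel_measurable_power[OF bm[unfolded set_borel_measurable_def]] by simp
    moreover have "(\<lambda>x. (indicator U x *\<^sub>R \<beta> (u x))\<^sup>2) = (\<lambda>x. indicator U x *\<^sub>R (\<beta> (u x))\<^sup>2)"
      by (auto simp: fun_eq_iff indicator_def)
    ultimately show ?thesis unfolding set_borel_measurable_def by simp
  qed
  have absi: "set_integrable lebesgue U (\<lambda>x. \<bar>u x\<bar>)" using cauchy_schwarz_L2(2)[OF one(1) u] by simp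
  have absI: "set_lebesgue_integral lebesgue U (\<lambda>x. \<bar>u x\<bar>) \<le> sqrt (Sigma_Algebra.measure lebesgue U) * L2norm U u"
    using cauchy_schwarz_L2(3)[OF one(1) u] one(2) by simp
  have onei: "set_integrable lebesgue U (\<lambda>x::'n. 1::real)"
    using one(1) by (simp add: L2_def)
  define D where "D x = M\<^sup>2 * 1 + (2 * M\<^sup>2) * \<bar>u x\<bar> + M\<^sup>2 * (u x)\<^sup>2" for x
  have Di: "set_integrable lebesgue U D"
    unfolding D_def using onei absi ui by (intro set_integral_add(1) set_integrable_mult_right)
  have bound: "(\<beta> (u x))\<^sup>2 \<le> D x" for x
  proof -
    have "\<bar>\<beta> (u x)\<bar> \<le> M * (1 + \<bar>u x\<bar>)" by (rule \<beta>(3))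
    then have "\<bar>\<beta> (u x)\<bar>\<^sup>2 \<le> (M * (1 + \<bar>u x\<bar>))\<^sup>2" by (rule power_mono) simp
    also have "\<dots> = D x" by (simp add: D_def power2_eq_square algebra_simps)
    finally show ?thesis by simp
  qed
  have bi: "set_integrable lebesgue U (\<lambda>x. (\<beta> (u x))\<^sup>2)"
    by (rule set_integrable_bound[OF Di b2m]) (auto intro!: AE_I2 simp: bound order_trans[OF _ abs_ge_self] intro: order_trans[OF bound abs_ge_self])
  show "L2 U (\<lambda>x. \<beta> (u x))" unfolding L2_def using bm bi by simp
  have "set_lebesgue_integral lebesgue U (\<lambda>x. (\<beta> (u x))\<^sup>2) \<le> set_lebesgue_integral lebesgue U D"
    by (rule set_integral_mono[OF bi Di bound])
  also have "\<dots> = M\<^sup>2 * Sigma_Algebra.measure lebesgue U + (2 * M\<^sup>2) * set_lebesgue_integral lebesgue U (\<lambda>x. \<bar>u x\<bar>) + M\<^sup>2 * (L2norm U u)\<^sup>2"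
  proof -
    have m1: "set_lebesgue_integral lebesgue U (\<lambda>x::'n. 1::real) = Sigma_Algebra.measure lebesgue U"
      unfolding set_lebesgue_integral_def by (simp add: integral_indicator)
    have m2: "set_lebesgue_integral lebesgue U (\<lambda>x. (u x)\<^sup>2) = (L2norm U u)\<^sup>2"
      using L2norm_sq[of U u] by simp
    have a: "set_integrable lebesgue U (\<lambda>x::'n. M\<^sup>2 * 1)" using onei by (rule set_integrable_mult_right)
    have b: "set_integrable lebesgue U (\<lambda>x. (2 * M\<^sup>2) * \<bar>u x\<bar>)" using absi by (rule set_integrable_mult_right)
    have c: "set_integrable lebesgue U (\<lambda>x. M\<^sup>2 * (u x)\<^sup>2)" using ui by (rule set_integrable_mult_right)
    have "set_lebesgue_integral lebesgue U D = set_lebesgue_integral lebesgue U (\<lambda>x. M\<^sup>2 * 1 + (2 * M\<^sup>2) * \<bar>u x\<bar>) + set_lebesgue_integral lebesgue U (\<lambda>x. M\<^sup>2 * (u x)\<^sup>2)"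
      unfolding D_def by (rule set_integral_add(2)[OF set_integral_add(1)[OF a b] c])
    also have "\<dots> = set_lebesgue_integral lebesgue U (\<lambda>x::'n. M\<^sup>2 * 1) + set_lebesgue_integral lebesgue U (\<lambda>x. (2 * M\<^sup>2) * \<bar>u x\<bar>) + set_lebesgue_integral lebesgue U (\<lambda>x. M\<^sup>2 * (u x)\<^sup>2)"
      by (simp only: set_integral_add(2)[OF a b])
    also have "\<dots> = M\<^sup>2 * Sigma_Algebra.measure lebesgue U + (2 * M\<^sup>2) * set_lebesgue_integral lebesgue U (\<lambda>x. \<bar>u x\<bar>) + M\<^sup>2 * (L2norm U u)\<^sup>2"
      by (simp only: set_integral_mult_right m1 m2)
    finally show ?thesis .

  qed
  also have "\<dots> \<le> M\<^sup>2 * Sigma_Algebra.measure lebesgue U + (2 * M\<^sup>2) * (sqrt (Sigma_Algebra.measure lebesgue U) * L2norm U u) + M\<^sup>2 * (L2norm U u)\<^sup>2"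
    using absI by (intro add_mono mult_left_mono order_refl) auto
  also have "\<dots> = (M * (sqrt (Sigma_Algebra.measure lebesgue U) + L2norm U u))\<^sup>2"
    by (simp add: power2_eq_square algebra_simps)
  finally have "set_lebesgue_integral lebesgue U (\<lambda>x. (\<beta> (u x))\<^sup>2) \<le> (M * (sqrt (Sigma_Algebra.measure lebesgue U) + L2norm U u))\<^sup>2" .
  then show "L2norm U (\<lambda>x. \<beta> (u x)) \<le> M * (sqrt (Sigma_Algebra.measure lebesgue U) + L2norm U u)"
  proof -
    have nn: "0 \<le> M * (sqrt (Sigma_Algebra.measure lebesgue U) + L2norm U u)"
      using M L2norm_nonneg[of U u] by simp
    have "L2norm U (\<lambda>x. \<beta> (u x)) = sqrt (set_lebesgue_integral lebesgue U (\<lambda>x. (\<beta> (u x))\<^sup>2))"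
      by (simp add: L2norm_def)
    then show ?thesis using real_le_lsqrt[OF nn \<open>_ \<le> (M * _)\<^sup>2\<close>] by simp
  qed
qed

lemma mono_beta_mult: "mono \<beta> \<Longrightarrow> \<beta> 0 = (0::real) \<Longrightarrow> 0 \<le> \<beta> s * (s::real)"
proof (cases "s \<ge> 0")
  case True
  assume "mono \<beta>" "\<beta> 0 = 0"
  then have "\<beta> s \<ge> 0" using True by (metis monoD)
  then show ?thesis using True by simp
next
  case False
  assume "mono \<beta>" "\<beta> 0 = 0"
  then have "\<beta> s \<le> 0" using False by (metis monoD linear)
  then show ?thesis using False by (simp add: mult_nonpos_nonpos)
qed

lemma energy_bound:
  fixes u f :: "'n::euclidean_space \<Rightarrow> real" and G :: "'n \<Rightarrow> 'v::euclidean_space" and Q :: "'n \<Rightarrow> real"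
  assumes u: "L2 U u" and f: "L2 U f" and G: "set_integrable lebesgue U (\<lambda>x. (norm (G x))\<^sup>2)"
    and Qi: "set_integrable lebesgue U Q" and Qc: "AE x in lebesgue. x \<in> U \<longrightarrow> \<mu> * (norm (G x))\<^sup>2 \<le> Q x"
    and eq: "set_lebesgue_integral lebesgue U (\<lambda>x. \<beta> (u x) * u x) + set_lebesgue_integral lebesgue U Q
             = set_lebesgue_integral lebesgue U (\<lambda>x. f x * u x)"
    and \<beta>: "mono \<beta>" "\<beta> 0 = 0" and \<mu>: "\<mu> > 0" and C: "C \<ge> 0" and P: "L2norm U u \<le> C * L2norm U G"
  shows "L2norm U G \<le> C * L2norm U f / \<mu>"
proof -
  have b: "0 \<le> set_lebesgue_integral lebesgue U (\<lambda>x. \<beta> (u x) * u x)"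
    by (rule set_int_nonneg) (rule mono_beta_mult[OF \<beta>])
  have "\<mu> * (L2norm U G)\<^sup>2 = set_lebesgue_integral lebesgue U (\<lambda>x. \<mu> * (norm (G x))\<^sup>2)"
    using L2norm_sq[of U G] by simp
  also have "\<dots> \<le> set_lebesgue_integral lebesgue U Q"
    by (rule set_integral_mono_AE[OF set_integrable_mult_right[OF G] Qi Qc])
  also have "\<dots> \<le> set_lebesgue_integral lebesgue U (\<lambda>x. f x * u x)" using eq b by linarith
  also have "\<dots> \<le> L2norm U f * L2norm U u" by (rule cauchy_schwarz_L2(4)[OF f u])
  also have "\<dots> \<le> L2norm U f * (C * L2norm U G)" by (rule mult_left_mono[OF P L2norm_nonneg])
  finally have main: "\<mu> * (L2norm U G)\<^sup>2 \<le> C * L2norm U f * L2norm U G" by (simp add: algebra_simps)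
  show ?thesis
  proof (cases "L2norm U G = 0")
    case True
    then show ?thesis using C L2norm_nonneg[of U f] \<mu> by simp
  next
    case False
    then have pos: "L2norm U G > 0" using L2norm_nonneg[of U G] by simp
    from main have "(\<mu> * L2norm U G) * L2norm U G \<le> (C * L2norm U f) * L2norm U G" by (simp add: power2_eq_square algebra_simps)
    then have "\<mu> * L2norm U G \<le> C * L2norm U f" using pos by simp
    then show ?thesis using \<mu> by (simp add: field_simps)
  qed
qed

lemma apply_measurable:
  fixes B :: "'x \<Rightarrow> 'w::euclidean_space \<Rightarrow> 'u::euclidean_space" and F :: "'x \<Rightarrow> 'w"
  assumes "\<And>x. linear (B x)" "\<And>\<xi>. (\<lambda>x. B x \<xi>) \<in> borel_measurable M" "F \<in> borel_measurable M"
  shows "(\<lambda>x. B x (F x)) \<in> borel_measurable M"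
proof -
  have "B x (F x) = (\<Sum>b\<in>Basis. (F x \<bullet> b) *\<^sub>R B x b)" for x
  proof -
    have "B x (F x) = B x (\<Sum>b\<in>Basis. (F x \<bullet> b) *\<^sub>R b)" by (simp add: euclidean_representation)
    also have "\<dots> = (\<Sum>b\<in>Basis. (F x \<bullet> b) *\<^sub>R B x b)"
      using assms(1)[of x] by (simp add: linear_sum linear_cmul)
    finally show ?thesis .
  qed
  moreover have "(\<lambda>x. \<Sum>b\<in>Basis. (F x \<bullet> b) *\<^sub>R B x b) \<in> borel_measurable M"
    by (intro borel_measurable_sum borel_measurable_scaleR borel_measurable_inner assms(2,3) borel_measurable_const)
  ultimately show ?thesis by simp
qed

lemma form_props:
  fixes B :: "'x::euclidean_space \<Rightarrow> 'w::euclidean_space \<Rightarrow> 'w" and G :: "'x \<Rightarrow> 'w"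
  assumes lin: "\<And>x. linear (B x)" and meas: "\<And>\<xi>. (\<lambda>x. B x \<xi>) \<in> borel_measurable lebesgue"
    and Gm: "set_borel_measurable lebesgue U G" and Gi: "set_integrable lebesgue U (\<lambda>x. (norm (G x))\<^sup>2)"
    and bd: "AE x in lebesgue. x \<in> U \<longrightarrow> (\<forall>\<xi>. norm (B x \<xi>) \<le> K * norm \<xi>)"
    and ell: "AE x in lebesgue. x \<in> U \<longrightarrow> (\<forall>\<xi>. B x \<xi> \<bullet> \<xi> \<ge> \<mu> * (norm \<xi>)\<^sup>2)"
  shows "set_integrable lebesgue U (\<lambda>x. B x (G x) \<bullet> G x)"
    "AE x in lebesgue. x \<in> U \<longrightarrow> \<mu> * (norm (G x))\<^sup>2 \<le> B x (G x) \<bullet> G x"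
proof -
  define G' where "G' x = indicator U x *\<^sub>R G x" for x
  have G'm: "G' \<in> borel_measurable lebesgue" using Gm unfolding set_borel_measurable_def G'_def[abs_def] .
  have "(\<lambda>x. B x (G' x) \<bullet> G' x) \<in> borel_measurable lebesgue"
    by (intro borel_measurable_inner apply_measurable[OF lin meas G'm] G'm)
  moreover have "(\<lambda>x. B x (G' x) \<bullet> G' x) = (\<lambda>x. indicator U x *\<^sub>R (B x (G x) \<bullet> G x))"
    using lin by (auto simp: fun_eq_iff G'_def indicator_def linear_0)
  ultimately have Qm: "set_borel_measurable lebesgue U (\<lambda>x. B x (G x) \<bullet> G x)"
    unfolding set_borel_measurable_def by simp
  show "set_integrable lebesgue U (\<lambda>x. B x (G x) \<bullet> G x)"
  proof (rule set_integrable_bound[OF set_integrable_mult_right[OF Gi, of K] Qm])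
    show "AE x\<in>U in lebesgue. norm (B x (G x) \<bullet> G x) \<le> norm (K * (norm (G x))\<^sup>2)"
      using bd
    proof eventually_elim
      case (elim x)
      show ?case
      proof
        assume "x \<in> U"
        then have b: "norm (B x (G x)) \<le> K * norm (G x)" using elim by blast
        have "norm (B x (G x) \<bullet> G x) \<le> norm (B x (G x)) * norm (G x)"
          by (simp add: Cauchy_Schwarz_ineq2)
        also have "\<dots> \<le> K * norm (G x) * norm (G x)" by (rule mult_right_mono[OF b]) simp
        also have "\<dots> \<le> \<bar>K\<bar> * (norm (G x) * norm (G x))"
          unfolding mult.assoc by (rule mult_right_mono) auto
        also have "\<dots> = norm (K * (norm (G x))\<^sup>2)" by (simp add: power2_eq_square abs_mult)
        finally show "norm (B x (G x) \<bullet> G x) \<le> norm (K * (norm (G x))\<^sup>2)" .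
      qed
    qed
  qed
  show "AE x in lebesgue. x \<in> U \<longrightarrow> \<mu> * (norm (G x))\<^sup>2 \<le> B x (G x) \<bullet> G x"
    using ell by eventually_elim blast
qed

lemma Dscale_inner: "Dscale e a \<bullet> b = a \<bullet> Dscale e b"
  by (cases a, cases b) (simp add: Dscale_def inner_Pair)

lemma Dscale_linear: "linear (Dscale e)"
  by (rule linearI) (auto simp: Dscale_def algebra_simps)

lemma Dscale_norm_le: "0 \<le> e \<Longrightarrow> e \<le> 1 \<Longrightarrow> norm (Dscale e \<xi>) \<le> norm \<xi>"
proof -
  assume e: "0 \<le> e" "e \<le> 1"
  obtain a b where \<xi>: "\<xi> = (a, b)" by fastforce
  have "e\<^sup>2 * (norm a)\<^sup>2 \<le> (norm a)\<^sup>2" using e by (intro mult_left_le_one_le) (auto intro: power_le_one)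
  then have "(norm (e *\<^sub>R a))\<^sup>2 \<le> (norm a)\<^sup>2" using e by (simp add: power_mult_distrib)
  then show ?thesis by (simp add: \<xi> Dscale_def norm_Pair del: norm_scaleR)
qed

lemma Dscale_norm_ge: "0 \<le> e \<Longrightarrow> e \<le> 1 \<Longrightarrow> e\<^sup>2 * (norm \<xi>)\<^sup>2 \<le> (norm (Dscale e \<xi>))\<^sup>2"
proof -
  assume e: "0 \<le> e" "e \<le> 1"
  obtain a b where \<xi>: "\<xi> = (a, b)" by fastforce
  have "e\<^sup>2 * (norm b)\<^sup>2 \<le> (norm b)\<^sup>2" using e by (intro mult_left_le_one_le) (auto intro: power_le_one)
  then show ?thesis by (simp add: \<xi> Dscale_def norm_Pair power_mult_distrib algebra_simps)
qed

lemma L2norm_not_int: "\<not> set_integrable lebesgue U (\<lambda>x. (norm (F x))\<^sup>2) \<Longrightarrow> L2norm U F = 0"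
  unfolding L2norm_def set_lebesgue_integral_def set_integrable_def
  by (simp add: not_integrable_integral_eq)

lemma final_arith:
  fixes nb nu nG nf s M C lam e :: real
  assumes "nb \<le> M * (s + nu)" "nu \<le> C * nG" "nG \<le> C * nf / (lam * e\<^sup>2)"
    "s \<ge> 0" "M \<ge> 0" "C \<ge> 0" "0 < e" "e \<le> 1" "lam > 0" "nf \<ge> 0"
  shows "nb \<le> M / e\<^sup>2 * (s + C\<^sup>2 * nf / lam)"
proof -
  have e2: "0 < e\<^sup>2" "e\<^sup>2 \<le> 1" using assms by (auto intro: power_le_one)
  have "nu \<le> C * (C * nf / (lam * e\<^sup>2))" using assms(2) mult_left_mono[OF assms(3) assms(6)] by linarith
  also have "\<dots> = (C\<^sup>2 * nf / lam) / e\<^sup>2" by (simp add: power2_eq_square field_simps)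
  finally have nu: "nu \<le> (C\<^sup>2 * nf / lam) / e\<^sup>2" .
  have s: "s \<le> s / e\<^sup>2" using e2 assms(4) by (simp add: le_divide_eq mult_right_le_one_le)
  have "nb \<le> M * (s / e\<^sup>2 + (C\<^sup>2 * nf / lam) / e\<^sup>2)"
    using assms(1) mult_left_mono[OF add_mono[OF s nu] assms(5)] by linarith
  also have "\<dots> = M / e\<^sup>2 * (s + C\<^sup>2 * nf / lam)" using e2 assms(9) by (simp add: field_simps)
  finally show ?thesis .
qed

lemma final_arith2:
  fixes nb nu nG nf s M C lam :: real
  assumes "nb \<le> M * (s + nu)" "nu \<le> C * nG" "nG \<le> C * nf / lam"
    "s \<ge> 0" "M \<ge> 0" "C \<ge> 0" "lam > 0"
  shows "nb \<le> M * (s + C\<^sup>2 * nf / lam)"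
proof -
  have "nu \<le> C * (C * nf / lam)" using assms(2) mult_left_mono[OF assms(3) assms(6)] by linarith
  also have "\<dots> = C\<^sup>2 * nf / lam" by (simp add: power2_eq_square)
  finally have nu: "nu \<le> C\<^sup>2 * nf / lam" .
  show ?thesis using assms(1) mult_left_mono[OF add_left_mono[OF nu] assms(5), of s] by linarith
qed

lemma U_facts:
  fixes \<omega>1 :: "'a::euclidean_space set" and \<omega>2 :: "'b::euclidean_space set"
  assumes "open \<omega>1" "bounded \<omega>1" "open \<omega>2" "bounded \<omega>2"
  shows "open (\<omega>1 \<times> \<omega>2)" "bounded (\<omega>1 \<times> \<omega>2)" "\<omega>1 \<times> \<omega>2 \<in> sets lebesgue"
    "emeasure lebesgue (\<omega>1 \<times> \<omega>2) < \<infinity>"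
proof -
  show o: "open (\<omega>1 \<times> \<omega>2)" using assms by (simp add: open_Times)
  show b: "bounded (\<omega>1 \<times> \<omega>2)" using assms by (simp add: bounded_Times)
  show s: "\<omega>1 \<times> \<omega>2 \<in> sets lebesgue" using o by (simp add: borel_open sets_completionI_sets)
  have "\<omega>1 \<times> \<omega>2 \<in> lmeasurable" by (rule bounded_set_imp_lmeasurable[OF b s])
  then show "emeasure lebesgue (\<omega>1 \<times> \<omega>2) < \<infinity>" unfolding fmeasurable_def by blast
qed

lemma eps_case:
  fixes \<omega>1 :: "'a::euclidean_space set" and \<omega>2 :: "'b::euclidean_space set"
    and A :: "'a \<times> 'b \<Rightarrow> 'a \<times> 'b \<Rightarrow> 'a \<times> 'b"
    and \<beta> :: "real \<Rightarrow> real" and f u :: "'a \<times> 'b \<Rightarrow> real"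
  assumes \<omega>: "open \<omega>1" "bounded \<omega>1" "open \<omega>2" "bounded \<omega>2"
    and f: "L2 (\<omega>1 \<times> \<omega>2) f"
    and A_lin: "\<And>x. linear (A x)"
    and A_meas: "\<And>\<xi>. (\<lambda>x. A x \<xi>) \<in> borel_measurable lebesgue"
    and A_bdd: "\<exists>K. AE x in lebesgue. x \<in> \<omega>1 \<times> \<omega>2 \<longrightarrow> onorm (A x) \<le> K"
    and lam: "lam > 0"
    and A_ell: "AE x in lebesgue. x \<in> \<omega>1 \<times> \<omega>2 \<longrightarrow> (\<forall>\<xi>. A x \<xi> \<bullet> \<xi> \<ge> lam * (norm \<xi>)\<^sup>2)"
    and \<beta>: "continuous_on UNIV \<beta>" "mono \<beta>" "\<beta> 0 = 0" "\<And>s. \<bar>\<beta> s\<bar> \<le> M * (1 + \<bar>s\<bar>)"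
    and eps: "0 < \<epsilon>" "\<epsilon> \<le> 1"
    and C: "C \<ge> 0"
    and uH: "H01 (\<omega>1 \<times> \<omega>2) u"
    and P: "L2norm (\<omega>1 \<times> \<omega>2) u \<le> C * L2norm (\<omega>1 \<times> \<omega>2) (wgrad (\<omega>1 \<times> \<omega>2) u)"
    and eq: "set_lebesgue_integral lebesgue (\<omega>1 \<times> \<omega>2) (\<lambda>x. \<beta> (u x) * u x)
        + set_lebesgue_integral lebesgue (\<omega>1 \<times> \<omega>2)
            (\<lambda>x. A_eps \<epsilon> A x (wgrad (\<omega>1 \<times> \<omega>2) u x) \<bullet> wgrad (\<omega>1 \<times> \<omega>2) u x)
        = set_lebesgue_integral lebesgue (\<omega>1 \<times> \<omega>2) (\<lambda>x. f x * u x)"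
  shows "L2norm (\<omega>1 \<times> \<omega>2) (wgrad (\<omega>1 \<times> \<omega>2) u) \<le> C * L2norm (\<omega>1 \<times> \<omega>2) f / (lam * \<epsilon>\<^sup>2)"
    "L2norm (\<omega>1 \<times> \<omega>2) (\<lambda>x. \<beta> (u x)) \<le> M / \<epsilon>\<^sup>2 *
        (sqrt (Sigma_Algebra.measure lebesgue (\<omega>1 \<times> \<omega>2)) + C\<^sup>2 * L2norm (\<omega>1 \<times> \<omega>2) f / lam)"
proof -
  define U where "U = \<omega>1 \<times> \<omega>2"
  note UF = U_facts[OF \<omega>, folded U_def]
  define G where "G = wgrad U u"
  have uL2: "L2 U u" using uH by (simp add: H01_def U_def)
  have "\<exists>G. is_weak_grad U u G" using uH by (auto simp: H01_def U_def)
  then have wg: "is_weak_grad U u G" unfolding G_def wgrad_def by (rule someI_ex)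
  have Gm: "set_borel_measurable lebesgue U G"
    by (rule loc_int_measurable[OF UF(1,2)]) (use wg in \<open>simp add: is_weak_grad_def\<close>)
  obtain K where K: "AE x in lebesgue. x \<in> U \<longrightarrow> onorm (A x) \<le> K" using A_bdd unfolding U_def by blast
  have M: "M \<ge> 0" using \<beta>(4)[of 0] \<beta>(3) by simp
  have Aeq: "A_eps \<epsilon> A x = Dscale \<epsilon> \<circ> A x \<circ> Dscale \<epsilon>" for x by (auto simp: fun_eq_iff A_eps_def)
  have lin: "linear (A_eps \<epsilon> A x)" for x
    unfolding Aeq by (intro linear_compose Dscale_linear A_lin)
  have Dc: "continuous_on UNIV (Dscale \<epsilon> :: 'a \<times> 'b \<Rightarrow> _)"
    using Dscale_linear[of \<epsilon>] unfolding linear_conv_bounded_linear by (rule linear_continuous_on)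
  have meas: "(\<lambda>x. A_eps \<epsilon> A x \<xi>) \<in> borel_measurable lebesgue" for \<xi>
    unfolding A_eps_def
    using measurable_compose[OF A_meas[of "Dscale \<epsilon> \<xi>"] borel_measurable_continuous_onI[OF Dc]] by (simp add: o_def)
  have bd: "AE x in lebesgue. x \<in> U \<longrightarrow> (\<forall>\<xi>. norm (A_eps \<epsilon> A x \<xi>) \<le> K * norm \<xi>)"
    using K
  proof eventually_elim
    case (elim x)
    show ?case
    proof (intro impI allI)
      fix \<xi> assume "x \<in> U"
      then have k: "onorm (A x) \<le> K" using elim by blast
      have bl: "bounded_linear (A x)" using A_lin linear_conv_bounded_linear by blast
      have K0: "K \<ge> 0" using onorm_pos_le[OF bl] k by linarith
      have "norm (A_eps \<epsilon> A x \<xi>) \<le> norm (A x (Dscale \<epsilon> \<xi>))"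
        unfolding A_eps_def using eps by (intro Dscale_norm_le) auto
      also have "\<dots> \<le> onorm (A x) * norm (Dscale \<epsilon> \<xi>)" by (rule onorm[OF bl])
      also have "\<dots> \<le> K * norm \<xi>"
        using k K0 Dscale_norm_le[of \<epsilon> \<xi>] eps by (intro mult_mono) auto
      finally show "norm (A_eps \<epsilon> A x \<xi>) \<le> K * norm \<xi>" .
    qed
  qed
  have ell: "AE x in lebesgue. x \<in> U \<longrightarrow> (\<forall>\<xi>. A_eps \<epsilon> A x \<xi> \<bullet> \<xi> \<ge> (lam * \<epsilon>\<^sup>2) * (norm \<xi>)\<^sup>2)"
    using A_ell unfolding U_def[symmetric]
  proof eventually_elim
    case (elim x)
    show ?case
    proof (intro impI allI)
      fix \<xi> assume "x \<in> U"
      then have a: "A x (Dscale \<epsilon> \<xi>) \<bullet> Dscale \<epsilon> \<xi> \<ge> lam * (norm (Dscale \<epsilon> \<xi>))\<^sup>2" using elim by blast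
      have "(lam * \<epsilon>\<^sup>2) * (norm \<xi>)\<^sup>2 = lam * (\<epsilon>\<^sup>2 * (norm \<xi>)\<^sup>2)" by simp
      also have "\<dots> \<le> lam * (norm (Dscale \<epsilon> \<xi>))\<^sup>2"
        using Dscale_norm_ge[of \<epsilon> \<xi>] eps lam by (intro mult_left_mono) auto
      also have "\<dots> \<le> A_eps \<epsilon> A x \<xi> \<bullet> \<xi>" using a by (simp add: A_eps_def Dscale_inner)
      finally show "A_eps \<epsilon> A x \<xi> \<bullet> \<xi> \<ge> (lam * \<epsilon>\<^sup>2) * (norm \<xi>)\<^sup>2" .
    qed
  qed
  have b1: "L2norm U G \<le> C * L2norm U f / (lam * \<epsilon>\<^sup>2)"
  proof (cases "set_integrable lebesgue U (\<lambda>x. (norm (G x))\<^sup>2)")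
    case True
    note FP = form_props[OF lin meas Gm True bd ell]
    show ?thesis
      by (rule energy_bound[OF uL2 f[folded U_def] True FP eq[folded U_def G_def] \<beta>(2,3) _ C P[folded U_def G_def]])
         (use lam eps in simp)
  next
    case False
    then have "L2norm U G = 0" by (rule L2norm_not_int)
    then show ?thesis using C L2norm_nonneg[of U f] lam eps by simp
  qed
  then show "L2norm (\<omega>1 \<times> \<omega>2) (wgrad (\<omega>1 \<times> \<omega>2) u) \<le> C * L2norm (\<omega>1 \<times> \<omega>2) f / (lam * \<epsilon>\<^sup>2)"
    by (simp add: U_def G_def)
  have bb: "L2norm U (\<lambda>x. \<beta> (u x)) \<le> M * (sqrt (Sigma_Algebra.measure lebesgue U) + L2norm U u)"
    by (rule beta_L2(2)[OF UF(3,4) uL2 \<beta>(1,3,4)])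
  show "L2norm (\<omega>1 \<times> \<omega>2) (\<lambda>x. \<beta> (u x)) \<le> M / \<epsilon>\<^sup>2 *
        (sqrt (Sigma_Algebra.measure lebesgue (\<omega>1 \<times> \<omega>2)) + C\<^sup>2 * L2norm (\<omega>1 \<times> \<omega>2) f / lam)"
    unfolding U_def[symmetric]
    by (rule final_arith[OF bb P[folded U_def G_def] b1]) (use M C eps lam L2norm_nonneg in auto)
qed


lemma norm_snd_le': "norm (snd p) \<le> norm p"
proof (cases p)
  case (Pair a b)
  then show ?thesis by (simp add: norm_Pair real_le_rsqrt)
qed

lemma lim_case:
  fixes \<omega>1 :: "'a::euclidean_space set" and \<omega>2 :: "'b::euclidean_space set"
    and A :: "'a \<times> 'b \<Rightarrow> 'a \<times> 'b \<Rightarrow> 'a \<times> 'b"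
    and \<beta> :: "real \<Rightarrow> real" and f u :: "'a \<times> 'b \<Rightarrow> real"
  assumes \<omega>: "open \<omega>1" "bounded \<omega>1" "open \<omega>2" "bounded \<omega>2"
    and f: "L2 (\<omega>1 \<times> \<omega>2) f"
    and A_lin: "\<And>x. linear (A x)"
    and A_meas: "\<And>\<xi>. (\<lambda>x. A x \<xi>) \<in> borel_measurable lebesgue"
    and A_bdd: "\<exists>K. AE x in lebesgue. x \<in> \<omega>1 \<times> \<omega>2 \<longrightarrow> onorm (A x) \<le> K"
    and lam: "lam > 0"
    and A_ell: "AE x in lebesgue. x \<in> \<omega>1 \<times> \<omega>2 \<longrightarrow> (\<forall>\<xi>. A x \<xi> \<bullet> \<xi> \<ge> lam * (norm \<xi>)\<^sup>2)"
    and \<beta>: "continuous_on UNIV \<beta>" "mono \<beta>" "\<beta> 0 = 0" "\<And>s. \<bar>\<beta> s\<bar> \<le> M * (1 + \<bar>s\<bar>)"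
    and C: "C \<ge> 0"
    and uH: "H01_X2 \<omega>1 \<omega>2 u"
    and P: "L2norm (\<omega>1 \<times> \<omega>2) u \<le> C * L2norm (\<omega>1 \<times> \<omega>2) (wgrad2 (\<omega>1 \<times> \<omega>2) u)"
    and eq: "set_lebesgue_integral lebesgue (\<omega>1 \<times> \<omega>2) (\<lambda>x. \<beta> (u x) * u x)
        + set_lebesgue_integral lebesgue (\<omega>1 \<times> \<omega>2)
            (\<lambda>x. A22 A x (wgrad2 (\<omega>1 \<times> \<omega>2) u x) \<bullet> wgrad2 (\<omega>1 \<times> \<omega>2) u x)
        = set_lebesgue_integral lebesgue (\<omega>1 \<times> \<omega>2) (\<lambda>x. f x * u x)"
  shows "L2norm (\<omega>1 \<times> \<omega>2) (wgrad2 (\<omega>1 \<times> \<omega>2) u) \<le> C * L2norm (\<omega>1 \<times> \<omega>2) f / lam"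
    "L2norm (\<omega>1 \<times> \<omega>2) (\<lambda>x. \<beta> (u x)) \<le> M *
        (sqrt (Sigma_Algebra.measure lebesgue (\<omega>1 \<times> \<omega>2)) + C\<^sup>2 * L2norm (\<omega>1 \<times> \<omega>2) f / lam)"
proof -
  define U where "U = \<omega>1 \<times> \<omega>2"
  note UF = U_facts[OF \<omega>, folded U_def]
  define G where "G = wgrad2 U u"
  have uL2: "L2 U u" using uH by (simp add: H01_X2_def U_def)
  have "\<exists>G. is_weak_grad2 U u G" using uH by (auto simp: H01_X2_def U_def)
  then have wg: "is_weak_grad2 U u G" unfolding G_def wgrad2_def by (rule someI_ex)
  have Gm: "set_borel_measurable lebesgue U G"
    by (rule loc_int_measurable[OF UF(1,2)]) (use wg in \<open>simp add: is_weak_grad2_def\<close>)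
  obtain K where K: "AE x in lebesgue. x \<in> U \<longrightarrow> onorm (A x) \<le> K" using A_bdd unfolding U_def by blast
  have M: "M \<ge> 0" using \<beta>(4)[of 0] \<beta>(3) by simp
  have Aeq: "A22 A x = snd \<circ> A x \<circ> (\<lambda>\<eta>. (0, \<eta>))" for x by (auto simp: fun_eq_iff A22_def)
  have lin: "linear (A22 A x)" for x
    unfolding Aeq by (intro linear_compose A_lin linear_snd) (rule linearI, auto)
  have meas: "(\<lambda>x. A22 A x \<eta>) \<in> borel_measurable lebesgue" for \<eta>
    unfolding A22_def
    using measurable_compose[OF A_meas[of "(0, \<eta>)"] borel_measurable_continuous_onI[OF continuous_on_snd[OF continuous_on_id]]] by (simp add: o_def)
  have bd: "AE x in lebesgue. x \<in> U \<longrightarrow> (\<forall>\<xi>. norm (A22 A x \<xi>) \<le> K * norm \<xi>)"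
    using K
  proof eventually_elim
    case (elim x)
    show ?case
    proof (intro impI allI)
      fix \<xi> assume "x \<in> U"
      then have k: "onorm (A x) \<le> K" using elim by blast
      have bl: "bounded_linear (A x)" using A_lin linear_conv_bounded_linear by blast
      have K0: "K \<ge> 0" using onorm_pos_le[OF bl] k by linarith
      have "norm (A22 A x \<xi>) \<le> norm (A x (0, \<xi>))"
        unfolding A22_def by (rule norm_snd_le')
      also have "\<dots> \<le> onorm (A x) * norm (0::'a, \<xi>)" by (rule onorm[OF bl])
      also have "\<dots> \<le> K * norm \<xi>"
        using k K0 by (simp add: mult_right_mono)
      finally show "norm (A22 A x \<xi>) \<le> K * norm \<xi>" .
    qed
  qed
  have ell: "AE x in lebesgue. x \<in> U \<longrightarrow> (\<forall>\<xi>. A22 A x \<xi> \<bullet> \<xi> \<ge> lam * (norm \<xi>)\<^sup>2)"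
    using A_ell unfolding U_def[symmetric]
  proof eventually_elim
    case (elim x)
    show ?case
    proof (intro impI allI)
      fix \<xi> assume "x \<in> U"
      then have a: "A x (0, \<xi>) \<bullet> (0, \<xi>) \<ge> lam * (norm (0::'a, \<xi>))\<^sup>2" using elim by blast
      then show "A22 A x \<xi> \<bullet> \<xi> \<ge> lam * (norm \<xi>)\<^sup>2" by (simp add: A22_def inner_Pair_0)
    qed
  qed
  have b1: "L2norm U G \<le> C * L2norm U f / lam"
  proof (cases "set_integrable lebesgue U (\<lambda>x. (norm (G x))\<^sup>2)")
    case True
    note FP = form_props[OF lin meas Gm True bd ell]
    show ?thesis
      by (rule energy_bound[OF uL2 f[folded U_def] True FP eq[folded U_def G_def] \<beta>(2,3) lam C P[folded U_def G_def]])
  next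
    case False
    then have "L2norm U G = 0" by (rule L2norm_not_int)
    then show ?thesis using C L2norm_nonneg[of U f] lam by simp
  qed
  then show "L2norm (\<omega>1 \<times> \<omega>2) (wgrad2 (\<omega>1 \<times> \<omega>2) u) \<le> C * L2norm (\<omega>1 \<times> \<omega>2) f / lam"
    by (simp add: U_def G_def)
  have bb: "L2norm U (\<lambda>x. \<beta> (u x)) \<le> M * (sqrt (Sigma_Algebra.measure lebesgue U) + L2norm U u)"
    by (rule beta_L2(2)[OF UF(3,4) uL2 \<beta>(1,3,4)])
  show "L2norm (\<omega>1 \<times> \<omega>2) (\<lambda>x. \<beta> (u x)) \<le> M *
        (sqrt (Sigma_Algebra.measure lebesgue (\<omega>1 \<times> \<omega>2)) + C\<^sup>2 * L2norm (\<omega>1 \<times> \<omega>2) f / lam)"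
    unfolding U_def[symmetric]
    by (rule final_arith2[OF bb P[folded U_def G_def] b1]) (use M C lam in auto)
qed

lemma L2norm_empty: "L2norm {} F = 0"
  by (simp add: L2norm_def set_lebesgue_integral_def)

theorem lemma3p1:
  fixes \<omega>1 :: "'a::euclidean_space set" and \<omega>2 :: "'b::euclidean_space set"
    and A :: "'a \<times> 'b \<Rightarrow> 'a \<times> 'b \<Rightarrow> 'a \<times> 'b"
    and \<beta> :: "real \<Rightarrow> real" and f :: "'a \<times> 'b \<Rightarrow> real"
    and V :: "('a \<times> 'b \<Rightarrow> real) set"
    and lam M C\<^sub>\<Omega> C\<^sub>\<omega>\<^sub>2 \<epsilon> :: real
    and u_eVf u_ef u_Vf u_f :: "'a \<times> 'b \<Rightarrow> real"
  assumes \<omega>1: "open \<omega>1" "bounded \<omega>1" and \<omega>2: "open \<omega>2" "bounded \<omega>2"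
    and f: "L2 (\<omega>1 \<times> \<omega>2) f"
    and A_lin: "\<And>x. linear (A x)"
    and A_meas: "\<And>\<xi>. (\<lambda>x. A x \<xi>) \<in> borel_measurable lebesgue"
    and A_bdd: "\<exists>K. AE x in lebesgue. x \<in> \<omega>1 \<times> \<omega>2 \<longrightarrow> onorm (A x) \<le> K"
    and lam: "lam > 0"
    and A_ell: "AE x in lebesgue. x \<in> \<omega>1 \<times> \<omega>2 \<longrightarrow> (\<forall>\<xi>. A x \<xi> \<bullet> \<xi> \<ge> lam * (norm \<xi>)\<^sup>2)"
    and \<beta>: "continuous_on UNIV \<beta>" "mono \<beta>" "\<beta> 0 = 0" "\<And>s. \<bar>\<beta> s\<bar> \<le> M * (1 + \<bar>s\<bar>)"
    and V: "admissible_V \<omega>1 \<omega>2 V"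
    and C\<^sub>\<Omega>: "\<And>v. H01 (\<omega>1 \<times> \<omega>2) v \<Longrightarrow>
              L2norm (\<omega>1 \<times> \<omega>2) v \<le> C\<^sub>\<Omega> * L2norm (\<omega>1 \<times> \<omega>2) (wgrad (\<omega>1 \<times> \<omega>2) v)"
    and C\<^sub>\<omega>\<^sub>2: "\<And>v. H01_X2 \<omega>1 \<omega>2 v \<Longrightarrow>
              L2norm (\<omega>1 \<times> \<omega>2) v \<le> C\<^sub>\<omega>\<^sub>2 * L2norm (\<omega>1 \<times> \<omega>2) (wgrad2 (\<omega>1 \<times> \<omega>2) v)"
    and eps: "0 < \<epsilon>" "\<epsilon> \<le> 1"
    and u_eVf: "sol_eps \<omega>1 \<omega>2 \<beta> A \<epsilon> V f u_eVf"
    and u_ef: "sol_eps \<omega>1 \<omega>2 \<beta> A \<epsilon> {u. H01 (\<omega>1 \<times> \<omega>2) u} f u_ef"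
    and u_Vf: "sol_lim \<omega>1 \<omega>2 \<beta> A V f u_Vf"
    and u_f: "sol_lim \<omega>1 \<omega>2 \<beta> A {u. H01_X2 \<omega>1 \<omega>2 u} f u_f"
  shows
    "L2norm (\<omega>1 \<times> \<omega>2) (wgrad (\<omega>1 \<times> \<omega>2) u_eVf) \<le> C\<^sub>\<Omega> * L2norm (\<omega>1 \<times> \<omega>2) f / (lam * \<epsilon>\<^sup>2)
   \<and> L2norm (\<omega>1 \<times> \<omega>2) (wgrad (\<omega>1 \<times> \<omega>2) u_ef) \<le> C\<^sub>\<Omega> * L2norm (\<omega>1 \<times> \<omega>2) f / (lam * \<epsilon>\<^sup>2)
   \<and> L2norm (\<omega>1 \<times> \<omega>2) (wgrad2 (\<omega>1 \<times> \<omega>2) u_Vf) \<le> C\<^sub>\<omega>\<^sub>2 * L2norm (\<omega>1 \<times> \<omega>2) f / lam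
   \<and> L2norm (\<omega>1 \<times> \<omega>2) (wgrad2 (\<omega>1 \<times> \<omega>2) u_f) \<le> C\<^sub>\<omega>\<^sub>2 * L2norm (\<omega>1 \<times> \<omega>2) f / lam
   \<and> L2norm (\<omega>1 \<times> \<omega>2) (\<lambda>x. \<beta> (u_eVf x)) \<le> M / \<epsilon>\<^sup>2 *
        (sqrt (measure lebesgue (\<omega>1 \<times> \<omega>2)) + C\<^sub>\<Omega>\<^sup>2 * L2norm (\<omega>1 \<times> \<omega>2) f / lam)
   \<and> L2norm (\<omega>1 \<times> \<omega>2) (\<lambda>x. \<beta> (u_ef x)) \<le> M / \<epsilon>\<^sup>2 *
        (sqrt (measure lebesgue (\<omega>1 \<times> \<omega>2)) + C\<^sub>\<Omega>\<^sup>2 * L2norm (\<omega>1 \<times> \<omega>2) f / lam)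
   \<and> L2norm (\<omega>1 \<times> \<omega>2) (\<lambda>x. \<beta> (u_Vf x)) \<le> M *
        (sqrt (measure lebesgue (\<omega>1 \<times> \<omega>2)) + C\<^sub>\<omega>\<^sub>2\<^sup>2 * L2norm (\<omega>1 \<times> \<omega>2) f / lam)
   \<and> L2norm (\<omega>1 \<times> \<omega>2) (\<lambda>x. \<beta> (u_f x)) \<le> M *
        (sqrt (measure lebesgue (\<omega>1 \<times> \<omega>2)) + C\<^sub>\<omega>\<^sub>2\<^sup>2 * L2norm (\<omega>1 \<times> \<omega>2) f / lam)"
proof -
  note UF = U_facts[OF \<omega>1 \<omega>2]
  have Vp: "\<forall>v\<in>V. H01 (\<omega>1 \<times> \<omega>2) v \<and> H01_X2 \<omega>1 \<omega>2 v" using V by (simp add: admissible_V_def)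
  show ?thesis
  proof (cases "\<omega>1 \<times> \<omega>2 = {}")
    case True
    have M: "M \<ge> 0" using \<beta>(4)[of 0] \<beta>(3) by simp
    show ?thesis using M unfolding True by (simp add: L2norm_empty)
  next
    case False
    obtain v where v: "H01 (\<omega>1 \<times> \<omega>2) v" "H01_X2 \<omega>1 \<omega>2 v" "L2norm (\<omega>1 \<times> \<omega>2) v > 0"
      using exists_pos[OF \<omega>1(1) \<omega>2(1) False] by blast
    have "0 < C\<^sub>\<Omega> * L2norm (\<omega>1 \<times> \<omega>2) (wgrad (\<omega>1 \<times> \<omega>2) v)"
      using C\<^sub>\<Omega>[OF v(1)] v(3) by linarith
    then have C1: "C\<^sub>\<Omega> \<ge> 0" using L2norm_nonneg[of "\<omega>1 \<times> \<omega>2" "wgrad (\<omega>1 \<times> \<omega>2) v"] by (auto simp: zero_less_mult_iff)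
    have "0 < C\<^sub>\<omega>\<^sub>2 * L2norm (\<omega>1 \<times> \<omega>2) (wgrad2 (\<omega>1 \<times> \<omega>2) v)"
      using C\<^sub>\<omega>\<^sub>2[OF v(2)] v(3) by linarith
    then have C2: "C\<^sub>\<omega>\<^sub>2 \<ge> 0" using L2norm_nonneg[of "\<omega>1 \<times> \<omega>2" "wgrad2 (\<omega>1 \<times> \<omega>2) v"] by (auto simp: zero_less_mult_iff)
    have h1: "H01 (\<omega>1 \<times> \<omega>2) u_eVf" using u_eVf Vp by (auto simp: sol_eps_def)
    have e1: "set_lebesgue_integral lebesgue (\<omega>1 \<times> \<omega>2) (\<lambda>x. \<beta> (u_eVf x) * u_eVf x)
        + set_lebesgue_integral lebesgue (\<omega>1 \<times> \<omega>2)
            (\<lambda>x. A_eps \<epsilon> A x (wgrad (\<omega>1 \<times> \<omega>2) u_eVf x) \<bullet> wgrad (\<omega>1 \<times> \<omega>2) u_eVf x)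
        = set_lebesgue_integral lebesgue (\<omega>1 \<times> \<omega>2) (\<lambda>x. f x * u_eVf x)"
      using u_eVf by (simp add: sol_eps_def)
    note r1 = eps_case[OF \<omega>1 \<omega>2 f A_lin A_meas A_bdd lam A_ell \<beta> eps C1 h1 C\<^sub>\<Omega>[OF h1] e1]
    have h2: "H01 (\<omega>1 \<times> \<omega>2) u_ef" using u_ef by (auto simp: sol_eps_def)
    have e2: "set_lebesgue_integral lebesgue (\<omega>1 \<times> \<omega>2) (\<lambda>x. \<beta> (u_ef x) * u_ef x)
        + set_lebesgue_integral lebesgue (\<omega>1 \<times> \<omega>2)
            (\<lambda>x. A_eps \<epsilon> A x (wgrad (\<omega>1 \<times> \<omega>2) u_ef x) \<bullet> wgrad (\<omega>1 \<times> \<omega>2) u_ef x)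
        = set_lebesgue_integral lebesgue (\<omega>1 \<times> \<omega>2) (\<lambda>x. f x * u_ef x)"
      using u_ef by (simp add: sol_eps_def)
    note r2 = eps_case[OF \<omega>1 \<omega>2 f A_lin A_meas A_bdd lam A_ell \<beta> eps C1 h2 C\<^sub>\<Omega>[OF h2] e2]
    have h3: "H01_X2 \<omega>1 \<omega>2 u_Vf" using u_Vf Vp by (auto simp: sol_lim_def)
    have e3: "set_lebesgue_integral lebesgue (\<omega>1 \<times> \<omega>2) (\<lambda>x. \<beta> (u_Vf x) * u_Vf x)
        + set_lebesgue_integral lebesgue (\<omega>1 \<times> \<omega>2)
            (\<lambda>x. A22 A x (wgrad2 (\<omega>1 \<times> \<omega>2) u_Vf x) \<bullet> wgrad2 (\<omega>1 \<times> \<omega>2) u_Vf x)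
        = set_lebesgue_integral lebesgue (\<omega>1 \<times> \<omega>2) (\<lambda>x. f x * u_Vf x)"
      using u_Vf by (simp add: sol_lim_def)
    note r3 = lim_case[OF \<omega>1 \<omega>2 f A_lin A_meas A_bdd lam A_ell \<beta> C2 h3 C\<^sub>\<omega>\<^sub>2[OF h3] e3]
    have h4: "H01_X2 \<omega>1 \<omega>2 u_f" using u_f by (auto simp: sol_lim_def)
    have e4: "set_lebesgue_integral lebesgue (\<omega>1 \<times> \<omega>2) (\<lambda>x. \<beta> (u_f x) * u_f x)
        + set_lebesgue_integral lebesgue (\<omega>1 \<times> \<omega>2)
            (\<lambda>x. A22 A x (wgrad2 (\<omega>1 \<times> \<omega>2) u_f x) \<bullet> wgrad2 (\<omega>1 \<times> \<omega>2) u_f x)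
        = set_lebesgue_integral lebesgue (\<omega>1 \<times> \<omega>2) (\<lambda>x. f x * u_f x)"
      using u_f by (simp add: sol_lim_def)
    note r4 = lim_case[OF \<omega>1 \<omega>2 f A_lin A_meas A_bdd lam A_ell \<beta> C2 h4 C\<^sub>\<omega>\<^sub>2[OF h4] e4]
    show ?thesis using r1 r2 r3 r4 by blast
  qed
qed


end
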